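(* For a noiseless wiretap network as described in the context, define $$\mathcal{R}_{\epsilon,o}=\Lambda\Big(\mathrm{Proj}_{\mathcal{S}}\big(\overline{\mathrm{con}}(\Gamma_N^*\cap\Gamma_1\cap\Gamma_2\cap\Gamma_3)\cap\Gamma_4\cap\Gamma_5\cap\Gamma_6\big)\Big).$$ Then $\mathcal{R}_\epsilon^{(w)}\subseteq\mathcal{R}_{\epsilon,o}$.
   Context: Network: an acyclic directed graph $G=(\mathcal{V},\mathcal{E})$, each edge $e$ an error-free bit pipe of finite capacity $c_e$; $\mathrm{In}(v)$, $\mathrm{Out}(v)$ denote incoming/outgoing edges of $v$. Sources $\mathcal{S}$ and terminals $\mathcal{T}$ are disjoint; sources have no incoming edges, terminals no outgoing edges, only sources generate keys; terminal $t$ demands the messages of $\beta(t)\subseteq\mathcal{S}$; $\mathcal{A}_s\subset2^{\mathcal{E}}$ is the collection of possibly wiretapped edge sets. A code of blocklength $n$: source $s$ has message $M_s$ uniform on $[1:2^{\lfloor nr_{m_s}\rfloor}]$ and key $K_s$ uniform on $[1:2^{\lfloor nr_{k_s}\rfloor}]$, all mutually independent; edge $e$ carries $W_e\in\mathcal{W}_e$ (finite), with $W_e=\eta_e(M_s,K_s)$ for $e\in\mathrm{Out}(s)$, $s\in\mathcal{S}$, and $W_e=\eta_e(W_{e'}:e'\in\mathrm{In}(v))$ for $e\in\mathrm{Out}(v)$, $v\notin\mathcal{S}\cup\mathcal{T}$; terminal $t$ outputs $\hat M_{s\to t}=\eta_{t,s}(W_e:e\in\mathrm{In}(t))$ for $s\in\beta(t)$.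 The fixed-length rate of edge $e$ is $r_e^{(f)}=n^{-1}\log_2|\mathcal W_e|$. A rate vector $\mathbf r=(r_s:s\in\mathcal{S})$ is achievable at asymptotically zero error subject to weak secrecy if for every $\epsilon>0$ there is a code of sufficiently large blocklength $n$ with (i) $r_{m_s}^{(n)}\ge r_s-\epsilon$ for all $s$; (ii) $r_e^{(f)}\le c_e$ for all $e$; (iii) $n^{-1}I(M_{\mathcal{S}};W_\alpha)\le\epsilon$ for all $\alpha\in\mathcal{A}_s$, where $M_{\mathcal S}=(M_s:s\in\mathcal S)$, $W_\alpha=(W_e:e\in\alpha)$; (iv) $\Pr(\hat M_{s\to t}\ne M_s)\le\epsilon$ for all $t\in\mathcal{T}$, $s\in\beta(t)$. $\mathcal{R}_\epsilon^{(w)}$ is the set of such rate vectors. Entropy region: let $N=2|\mathcal{S}|+|\mathcal{E}|$ and index $N$ random variables by the labels $m_s,k_s$ ($s\in\mathcal S$) and $e$ ($e\in\mathcal E$). $\mathcal{H}_N$ is the set of real vectors $\mathbf h$ with coordinates $h_\gamma$ indexed by subsets $\gamma$ of these labels ($h_\emptyset=0$); for sets of labels we write e.g. $h_{m_s,k_s,\mathrm{Out}(s)}$ for the coordinate of the union. $\mathbf h$ is entropic if $h_\gamma=H(U_\gamma)$ for some jointly distributed finite-alphabet random variables $(U_{m_s},U_{k_s})_{s},(U_e)_e$, and $\Gamma_N^*$ is the set of entropic vectors. Define: $\Gamma_1=\{\mathbf h: h_{\{m_s,k_s:s\in\mathcal S\}}=\sum_{s\in\mathcal S}(h_{m_s}+h_{k_s})\}$;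 $\Gamma_2=\{\mathbf h: h_{m_s,k_s,\mathrm{Out}(s)}=h_{m_s,k_s}\ \forall s\in\mathcal S\}$; $\Gamma_3=\{\mathbf h: h_{\mathrm{In}(v)\cup\mathrm{Out}(v)}=h_{\mathrm{In}(v)}\ \forall v\in\mathcal V\setminus(\mathcal S\cup\mathcal T)\}$; $\Gamma_4=\{\mathbf h: h_{m_{\beta(t)},\mathrm{In}(t)}=h_{\mathrm{In}(t)}\ \forall t\in\mathcal T\}$ where $m_{\beta(t)}=\{m_s:s\in\beta(t)\}$; $\Gamma_5=\{\mathbf h: h_e\le c_e\ \forall e\in\mathcal E\}$; $\Gamma_6=\{\mathbf h: h_{m_{\mathcal S},\alpha}=h_{m_{\mathcal S}}+h_\alpha\ \forall\alpha\in\mathcal A_s\}$ where $m_{\mathcal S}=\{m_s:s\in\mathcal S\}$. $\overline{\mathrm{con}}(\mathcal A)$ is the smallest closed convex set containing $\mathcal A$. $\mathrm{Proj}_{\mathcal S}:\mathcal H_N\to\mathbb R^{|\mathcal S|}$ maps $\mathbf h$ to $(h_{m_s}:s\in\mathcal S)$. For $\mathcal A\subset\mathbb R^n$, $\Lambda(\mathcal A)=\{\mathbf x\in\mathbb R^n:\mathbf x\le\mathbf y\text{ componentwise for some }\mathbf y\in\mathcal A\}$. *)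

theory Defs
  imports "HOL-Analysis.Analysis" "HOL-Probability.Probability"
begin

text \<open>A network: vertex set V, edge set E (edges are abstract, with tail and head,
so parallel edges are allowed), sources S, terminals T, demands beta,
capacities c, and the collection Aw of possibly wiretapped edge sets.\<close>

definition In_edges :: "'e set \<Rightarrow> ('e \<Rightarrow> 'v) \<Rightarrow> 'v \<Rightarrow> 'e set" where
  "In_edges E hdv v = {e \<in> E. hdv e = v}"

definition Out_edges :: "'e set \<Rightarrow> ('e \<Rightarrow> 'v) \<Rightarrow> 'v \<Rightarrow> 'e set" where
  "Out_edges E tlv v = {e \<in> E. tlv e = v}"

definition wiretap_network ::
  "'v set \<Rightarrow> 'e set \<Rightarrow> ('e \<Rightarrow> 'v) \<Rightarrow> ('e \<Rightarrow> 'v) \<Rightarrow> 'v set \<Rightarrow> 'v set \<Rightarrow>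
   ('v \<Rightarrow> 'v set) \<Rightarrow> ('e \<Rightarrow> real) \<Rightarrow> 'e set set \<Rightarrow> bool" where
  "wiretap_network V E tlv hdv S T beta c Aw \<longleftrightarrow>
     finite V \<and> finite E \<and>
     (\<forall>e\<in>E. tlv e \<in> V \<and> hdv e \<in> V) \<and>
     acyclic {(tlv e, hdv e) | e. e \<in> E} \<and>
     S \<subseteq> V \<and> T \<subseteq> V \<and> S \<inter> T = {} \<and>
     (\<forall>s\<in>S. In_edges E hdv s = {}) \<and>
     (\<forall>t\<in>T. Out_edges E tlv t = {}) \<and>
     (\<forall>t\<in>T. beta t \<subseteq> S) \<and>
     (\<forall>e\<in>E. 0 \<le> c e) \<and>
     (\<forall>\<alpha>\<in>Aw. \<alpha> \<subseteq> E)"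

definition ent :: "'a pmf \<Rightarrow> real" where
  "ent p = - (\<Sum>x\<in>set_pmf p. pmf p x * log 2 (pmf p x))"

definition Hrv :: "'w pmf \<Rightarrow> ('w \<Rightarrow> 'a) \<Rightarrow> real" where
  "Hrv P X = ent (map_pmf X P)"

definition MI :: "'w pmf \<Rightarrow> ('w \<Rightarrow> 'a) \<Rightarrow> ('w \<Rightarrow> 'b) \<Rightarrow> real" where
  "MI P X Y = Hrv P X + Hrv P Y - Hrv P (\<lambda>w. (X w, Y w))"

definition idx_set :: "nat \<Rightarrow> real \<Rightarrow> nat set" where
  "idx_set n r = {1 .. 2 ^ nat \<lfloor>real n * r\<rfloor>}"

text \<open>Sample space of all (message, key) tuples; the uniform distribution on it
 makes all messages and keys independent and uniform.\<close>
definition sample_space :: "'v set \<Rightarrow> nat \<Rightarrow> ('v \<Rightarrow> real) \<Rightarrow> ('v \<Rightarrow> real)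
    \<Rightarrow> (('v \<Rightarrow> nat) \<times> ('v \<Rightarrow> nat)) set" where
  "sample_space S n rm rk = (PiE S (\<lambda>s. idx_set n (rm s))) \<times> (PiE S (\<lambda>s. idx_set n (rk s)))"

text \<open>A code of blocklength n: message rates rm, key rates rk, edge alphabets Alph,
 the edge symbols W e (m,k) as a function of all messages/keys, and decoders Dec t s.
 W must be produced by local encoding functions: outgoing edges of a source s
 depend only on (M_s,K_s); outgoing edges of an intermediate node v depend only on the
 symbols on In(v).\<close>
definition is_code ::
  "'v set \<Rightarrow> 'e set \<Rightarrow> ('e \<Rightarrow> 'v) \<Rightarrow> ('e \<Rightarrow> 'v) \<Rightarrow> 'v set \<Rightarrow> 'v set \<Rightarrow>
   nat \<Rightarrow> ('v \<Rightarrow> real) \<Rightarrow> ('v \<Rightarrow> real) \<Rightarrow> ('e \<Rightarrow> nat set) \<Rightarrow>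
   ('e \<Rightarrow> ('v \<Rightarrow> nat) \<times> ('v \<Rightarrow> nat) \<Rightarrow> nat) \<Rightarrow> bool" where
  "is_code V E tlv hdv S T n rm rk Alph W \<longleftrightarrow>
     0 < n \<and> (\<forall>s\<in>S. 0 \<le> rm s \<and> 0 \<le> rk s) \<and>
     (\<forall>e\<in>E. finite (Alph e)) \<and>
     (\<forall>e\<in>E. \<forall>\<omega>\<in>sample_space S n rm rk. W e \<omega> \<in> Alph e) \<and>
     (\<forall>s\<in>S. \<forall>e\<in>Out_edges E tlv s. \<exists>f. \<forall>(m,k)\<in>sample_space S n rm rk.
         W e (m,k) = f (m s, k s)) \<and>
     (\<forall>v\<in>V - (S \<union> T). \<forall>e\<in>Out_edges E tlv v. \<exists>f. \<forall>\<omega>\<in>sample_space S n rm rk.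
         W e \<omega> = f (restrict (\<lambda>e'. W e' \<omega>) (In_edges E hdv v)))"

definition decode_est :: "'e set \<Rightarrow> ('e \<Rightarrow> 'v) \<Rightarrow> ('v \<Rightarrow> 'v \<Rightarrow> ('e \<Rightarrow> nat) \<Rightarrow> nat) \<Rightarrow>
    ('e \<Rightarrow> ('v \<Rightarrow> nat) \<times> ('v \<Rightarrow> nat) \<Rightarrow> nat) \<Rightarrow> 'v \<Rightarrow> 'v \<Rightarrow> ('v \<Rightarrow> nat) \<times> ('v \<Rightarrow> nat) \<Rightarrow> nat" where
  "decode_est E hdv Dec W t s \<omega> = Dec t s (restrict (\<lambda>e. W e \<omega>) (In_edges E hdv t))"

definition weak_secrecy_region ::
  "'v set \<Rightarrow> 'e set \<Rightarrow> ('e \<Rightarrow> 'v) \<Rightarrow> ('e \<Rightarrow> 'v) \<Rightarrow> 'v set \<Rightarrow> 'v set \<Rightarrow>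
   ('v \<Rightarrow> 'v set) \<Rightarrow> ('e \<Rightarrow> real) \<Rightarrow> 'e set set \<Rightarrow> ('v \<Rightarrow> real) set" where
  "weak_secrecy_region V E tlv hdv S T beta c Aw =
    {r. (\<forall>v. v \<notin> S \<longrightarrow> r v = 0) \<and>
      (\<forall>\<epsilon>>0. \<exists>N. \<forall>n\<ge>N. \<exists>rm rk Alph W Dec.
         is_code V E tlv hdv S T n rm rk Alph W \<and>
         (let P = pmf_of_set (sample_space S n rm rk) in
           (\<forall>s\<in>S. real (nat \<lfloor>real n * rm s\<rfloor>) / real n \<ge> r s - \<epsilon>) \<and>
           (\<forall>e\<in>E. log 2 (real (card (Alph e))) / real n \<le> c e) \<and>
           (\<forall>\<alpha>\<in>Aw. MI P (\<lambda>(m,k). m) (\<lambda>\<omega>. restrict (\<lambda>e. W e \<omega>) \<alpha>) / real n \<le> \<epsilon>) \<and>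
           (\<forall>t\<in>T. \<forall>s\<in>beta t.
              measure_pmf.prob P {(m,k). decode_est E hdv Dec W t s (m,k) \<noteq> m s} \<le> \<epsilon>)))}"

datatype ('v, 'e) lbl = Msg 'v | Key 'v | Edg 'e

type_synonym ('v, 'e) hvec = "('v, 'e) lbl set \<Rightarrow> real"

definition labels :: "'v set \<Rightarrow> 'e set \<Rightarrow> ('v, 'e) lbl set" where
  "labels S E = Msg ` S \<union> Key ` S \<union> Edg ` E"

text \<open>H_N: real vectors indexed by subsets of the N labels, with h_{} = 0.
 (Coordinates for sets of labels not belonging to the network are fixed to 0.)\<close>
definition HN :: "'v set \<Rightarrow> 'e set \<Rightarrow> ('v, 'e) hvec set" where
  "HN S E = {h. h {} = 0 \<and> (\<forall>\<gamma>. \<not> \<gamma> \<subseteq> labels S E \<longrightarrow> h \<gamma> = 0)}"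

text \<open>Entropic vectors: entropy vectors of finite-alphabet random variables U_i
 (i a label), given by a finitely supported joint distribution p of (U_i)_i
 (alphabets encoded in nat).\<close>
definition entropic :: "'v set \<Rightarrow> 'e set \<Rightarrow> ('v, 'e) hvec set" where
  "entropic S E = {h \<in> HN S E. \<exists>p :: (('v,'e) lbl \<Rightarrow> nat) pmf. finite (set_pmf p) \<and>
      (\<forall>\<gamma>\<subseteq>labels S E. h \<gamma> = ent (map_pmf (\<lambda>u. restrict u \<gamma>) p))}"

definition Gamma1 :: "'v set \<Rightarrow> 'e set \<Rightarrow> ('v, 'e) hvec set" where
  "Gamma1 S E = {h \<in> HN S E. h (Msg ` S \<union> Key ` S) = (\<Sum>s\<in>S. h {Msg s} + h {Key s})}"

definition Gamma2 :: "'v set \<Rightarrow> 'e set \<Rightarrow> ('e \<Rightarrow> 'v) \<Rightarrow> ('v, 'e) hvec set" where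
  "Gamma2 S E tlv = {h \<in> HN S E. \<forall>s\<in>S.
      h ({Msg s, Key s} \<union> Edg ` Out_edges E tlv s) = h {Msg s, Key s}}"

definition Gamma3 :: "'v set \<Rightarrow> 'e set \<Rightarrow> ('e \<Rightarrow> 'v) \<Rightarrow> ('e \<Rightarrow> 'v) \<Rightarrow> 'v set \<Rightarrow> 'v set
    \<Rightarrow> ('v, 'e) hvec set" where
  "Gamma3 V E tlv hdv S T = {h \<in> HN S E. \<forall>v\<in>V - (S \<union> T).
      h (Edg ` (In_edges E hdv v \<union> Out_edges E tlv v)) = h (Edg ` In_edges E hdv v)}"

definition Gamma4 :: "'v set \<Rightarrow> 'e set \<Rightarrow> ('e \<Rightarrow> 'v) \<Rightarrow> 'v set \<Rightarrow> ('v \<Rightarrow> 'v set)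
    \<Rightarrow> ('v, 'e) hvec set" where
  "Gamma4 S E hdv T beta = {h \<in> HN S E. \<forall>t\<in>T.
      h (Msg ` beta t \<union> Edg ` In_edges E hdv t) = h (Edg ` In_edges E hdv t)}"

definition Gamma5 :: "'v set \<Rightarrow> 'e set \<Rightarrow> ('e \<Rightarrow> real) \<Rightarrow> ('v, 'e) hvec set" where
  "Gamma5 S E c = {h \<in> HN S E. \<forall>e\<in>E. h {Edg e} \<le> c e}"

definition Gamma6 :: "'v set \<Rightarrow> 'e set \<Rightarrow> 'e set set \<Rightarrow> ('v, 'e) hvec set" where
  "Gamma6 S E Aw = {h \<in> HN S E. \<forall>\<alpha>\<in>Aw.
      h (Msg ` S \<union> Edg ` \<alpha>) = h (Msg ` S) + h (Edg ` \<alpha>)}"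

definition convex_fun :: "('a \<Rightarrow> real) set \<Rightarrow> bool" where
  "convex_fun C \<longleftrightarrow> (\<forall>x\<in>C. \<forall>y\<in>C. \<forall>u::real. 0 \<le> u \<and> u \<le> 1 \<longrightarrow>
      (\<lambda>i. u * x i + (1 - u) * y i) \<in> C)"

text \<open>Smallest closed convex set containing A (product topology = Euclidean topology on
 the finitely many relevant coordinates).\<close>
definition closed_conv :: "('a \<Rightarrow> real) set \<Rightarrow> ('a \<Rightarrow> real) set" where
  "closed_conv A = \<Inter>{C. A \<subseteq> C \<and> closed C \<and> convex_fun C}"

definition ProjS :: "'v set \<Rightarrow> ('v, 'e) hvec \<Rightarrow> ('v \<Rightarrow> real)" where
  "ProjS S h = (\<lambda>s. if s \<in> S then h {Msg s} else 0)"

text \<open>Vectors of R^{|S|} are represented as functions vanishing outside S.\<close>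
definition Lambda :: "'v set \<Rightarrow> ('v \<Rightarrow> real) set \<Rightarrow> ('v \<Rightarrow> real) set" where
  "Lambda S A = {x. (\<forall>v. v \<notin> S \<longrightarrow> x v = 0) \<and> (\<exists>y\<in>A. \<forall>s\<in>S. x s \<le> y s)}"

definition outer_region ::
  "'v set \<Rightarrow> 'e set \<Rightarrow> ('e \<Rightarrow> 'v) \<Rightarrow> ('e \<Rightarrow> 'v) \<Rightarrow> 'v set \<Rightarrow> 'v set \<Rightarrow>
   ('v \<Rightarrow> 'v set) \<Rightarrow> ('e \<Rightarrow> real) \<Rightarrow> 'e set set \<Rightarrow> ('v \<Rightarrow> real) set" where
  "outer_region V E tlv hdv S T beta c Aw =
    Lambda S (ProjS S `
      (closed_conv (entropic S E \<inter> Gamma1 S E \<inter> Gamma2 S E tlv \<inter> Gamma3 V E tlv hdv S T)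
       \<inter> Gamma4 S E hdv T beta \<inter> Gamma5 S E c \<inter> Gamma6 S E Aw))"

end

theory Submission
  imports Defs
begin

lemma tangent_sum:
  fixes w :: "'i \<Rightarrow> real"
  assumes fin: "finite I" and pos: "\<And>i. i \<in> I \<Longrightarrow> 0 < w i" and ne: "I \<noteq> {}"
  shows "(\<Sum>i\<in>I. w i * log 2 (1 / w i)) \<le> sum w I * log 2 (real (card I) / sum w I)"
proof -
  define q where "q = sum w I"
  define k where "k = real (card I)"
  have qpos: "0 < q" unfolding q_def using fin ne pos by (simp add: sum_pos)
  have kpos: "0 < k" unfolding k_def using fin ne by (simp add: card_gt_0_iff)
  have pt: "w i * log 2 (1 / w i) - w i * log 2 (k / q) \<le> (q / k - w i) / ln 2" if i: "i \<in> I" for i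
  proof -
    have wi: "0 < w i" using pos i by auto
    have "w i * log 2 (1 / w i) - w i * log 2 (k / q) = w i * log 2 (q / (k * w i))"
      using wi kpos qpos by (simp add: log_divide log_mult algebra_simps)
    also have "\<dots> = w i * ln (q / (k * w i)) / ln 2" by (simp add: log_def)
    also have "\<dots> \<le> w i * (q / (k * w i) - 1) / ln 2"
      using wi kpos qpos by (intro divide_right_mono mult_left_mono ln_le_minus_one) auto
    also have "\<dots> = (q / k - w i) / ln 2" using wi kpos by (simp add: field_simps)
    finally show ?thesis .
  qed
  have "(\<Sum>i\<in>I. w i * log 2 (1 / w i)) - q * log 2 (k / q) =
        (\<Sum>i\<in>I. w i * log 2 (1 / w i) - w i * log 2 (k / q))"
    by (simp add: sum_subtractf q_def sum_distrib_right)
  also have "\<dots> \<le> (\<Sum>i\<in>I. (q / k - w i) / ln 2)" by (rule sum_mono) (use pt in auto)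
  also have "\<dots> = (k * (q / k) - q) / ln 2"
    by (simp add: sum_divide_distrib[symmetric] sum_subtractf q_def k_def)
  also have "\<dots> = 0" using kpos by simp
  finally show ?thesis unfolding q_def k_def by simp
qed

lemma ent_le_log_card:
  assumes "finite (set_pmf p)"
  shows "ent p \<le> log 2 (real (card (set_pmf p)))"
proof -
  have ne: "set_pmf p \<noteq> {}" by (rule set_pmf_not_empty)
  have s1: "sum (pmf p) (set_pmf p) = 1"
    using assms by (simp add: sum_pmf_eq_1)
  have "ent p = (\<Sum>x\<in>set_pmf p. pmf p x * log 2 (1 / pmf p x))"
    unfolding ent_def
    by (simp add: sum_negf[symmetric] log_divide set_pmf_eq' pmf_pos del: set_pmf_iff)
  also have "\<dots> \<le> sum (pmf p) (set_pmf p) * log 2 (real (card (set_pmf p)) / sum (pmf p) (set_pmf p))"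
    by (rule tangent_sum) (use assms ne in \<open>auto simp: pmf_positive\<close>)
  finally show ?thesis using s1 by simp
qed

lemma pmf_map_fin:
  assumes "finite (set_pmf Q)"
  shows "pmf (map_pmf X Q) x = sum (pmf Q) {w \<in> set_pmf Q. X w = x}"
proof -
  have "pmf (map_pmf X Q) x = measure Q (X -` {x})" by (simp add: pmf_map)
  also have "\<dots> = measure Q {w \<in> set_pmf Q. X w = x}"
    by (subst measure_Int_set_pmf[symmetric]) (auto intro!: arg_cong[where f="measure Q"])
  also have "\<dots> = sum (pmf Q) {w \<in> set_pmf Q. X w = x}"
    using assms by (simp add: measure_measure_pmf_finite)
  finally show ?thesis .
qed

lemma regroup:
  assumes fin: "finite (set_pmf Q)"
  shows "(\<Sum>y\<in>X ` set_pmf Q. pmf (map_pmf X Q) y * g y) = (\<Sum>w\<in>set_pmf Q. pmf Q w * g (X w))"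
proof -
  have "(\<Sum>w\<in>set_pmf Q. pmf Q w * g (X w)) =
     (\<Sum>y\<in>X ` set_pmf Q. \<Sum>w\<in>{w \<in> set_pmf Q. X w = y}. pmf Q w * g (X w))"
    using fin by (rule sum.image_gen)
  also have "\<dots> = (\<Sum>y\<in>X ` set_pmf Q. \<Sum>w\<in>{w \<in> set_pmf Q. X w = y}. pmf Q w * g y)"
    by (intro sum.cong refl) auto
  also have "\<dots> = (\<Sum>y\<in>X ` set_pmf Q. pmf (map_pmf X Q) y * g y)"
    by (simp add: pmf_map_fin[OF fin] sum_distrib_right)
  finally show ?thesis by simp
qed

lemma Hrv_sum:
  assumes fin: "finite (set_pmf Q)"
  shows "Hrv Q X = - (\<Sum>w\<in>set_pmf Q. pmf Q w * log 2 (pmf (map_pmf X Q) (X w)))"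
  unfolding Hrv_def ent_def by (simp add: regroup[OF fin])

lemma pmf_map_pos:
  "w \<in> set_pmf Q \<Longrightarrow> 0 < pmf (map_pmf X Q) (X w)"
  by (simp add: pmf_positive set_map_pmf)

lemma Hrv_fun_le:
  assumes fin: "finite (set_pmf Q)"
  shows "Hrv Q (\<lambda>w. f (X w)) \<le> Hrv Q X"
proof -
  have "pmf Q w * log 2 (pmf (map_pmf X Q) (X w)) \<le> pmf Q w * log 2 (pmf (map_pmf (\<lambda>w. f (X w)) Q) (f (X w)))"
    if "w \<in> set_pmf Q" for w
  proof (intro mult_left_mono)
    have "pmf (map_pmf X Q) (X w) = measure Q (X -` {X w})" by (simp add: pmf_map)
    also have "\<dots> \<le> measure Q ((\<lambda>w. f (X w)) -` {f (X w)})"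
      by (intro measure_pmf.finite_measure_mono) auto
    also have "\<dots> = pmf (map_pmf (\<lambda>w. f (X w)) Q) (f (X w))" by (simp add: pmf_map)
    finally show "log 2 (pmf (map_pmf X Q) (X w)) \<le> log 2 (pmf (map_pmf (\<lambda>w. f (X w)) Q) (f (X w)))"
      using pmf_map_pos[OF that, of X] by simp
  qed simp
  then show ?thesis unfolding Hrv_sum[OF fin] by (simp add: sum_mono)
qed

lemma Hrv_cong:
  "(\<And>w. w \<in> set_pmf Q \<Longrightarrow> X w = Y w) \<Longrightarrow> Hrv Q X = Hrv Q Y"
  unfolding Hrv_def by (metis map_pmf_cong)

lemma Hrv_le_fun:
  assumes fin: "finite (set_pmf Q)" and "\<And>w. w \<in> set_pmf Q \<Longrightarrow> X w = f (Y w)"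
  shows "Hrv Q X \<le> Hrv Q Y"
proof -
  have "Hrv Q X = Hrv Q (\<lambda>w. f (Y w))" using assms(2) by (rule Hrv_cong)
  also have "\<dots> \<le> Hrv Q Y" by (rule Hrv_fun_le[OF fin])
  finally show ?thesis .
qed

lemma Hrv_eq_fun:
  assumes fin: "finite (set_pmf Q)" and "\<And>w. w \<in> set_pmf Q \<Longrightarrow> X w = f (Y w)"
    and "\<And>w. w \<in> set_pmf Q \<Longrightarrow> Y w = g (X w)"
  shows "Hrv Q X = Hrv Q Y"
  using Hrv_le_fun[of Q X f Y, OF fin assms(2)] Hrv_le_fun[of Q Y g X, OF fin assms(3)] by simp

lemma ent_nonneg: "0 \<le> ent p"
proof -
  have "pmf p x * log 2 (pmf p x) \<le> 0" if "x \<in> set_pmf p" for x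
  proof -
    have "0 < pmf p x" "pmf p x \<le> 1" using that by (auto simp: pmf_positive pmf_le_1)
    then show ?thesis by (simp add: mult_nonneg_nonpos)
  qed
  then show ?thesis unfolding ent_def by (simp add: sum_nonpos)
qed

lemma Hrv_nonneg: "0 \<le> Hrv Q X" unfolding Hrv_def by (rule ent_nonneg)

lemma Hrv_le_card:
  assumes fin: "finite (set_pmf Q)"
  shows "Hrv Q X \<le> log 2 (real (card (X ` set_pmf Q)))"
  unfolding Hrv_def using ent_le_log_card[of "map_pmf X Q"] fin by (simp add: set_map_pmf)

lemma Hrv_le_card_sub:
  assumes fin: "finite (set_pmf Q)" and "finite A" and "\<And>w. w \<in> set_pmf Q \<Longrightarrow> X w \<in> A"
  shows "Hrv Q X \<le> log 2 (real (card A))"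
proof -
  have "X ` set_pmf Q \<noteq> {}" by (simp add: set_pmf_not_empty)
  moreover have "card (X ` set_pmf Q) \<le> card A" using assms by (intro card_mono) auto
  ultimately have "log 2 (real (card (X ` set_pmf Q))) \<le> log 2 (real (card A))"
    using fin assms(2) by (subst log_le_cancel_iff) (auto simp: card_gt_0_iff)
  then show ?thesis using Hrv_le_card[OF fin, of X] by simp
qed

lemma Hrv_const: "Hrv Q (\<lambda>w. c) = 0"
  unfolding Hrv_def ent_def by (simp add: map_pmf_const)

definition clp :: "'w pmf \<Rightarrow> 'w \<Rightarrow> 'w" where
  "clp Q w = (if w \<in> set_pmf Q then w else (SOME v. v \<in> set_pmf Q))"

lemma clp_in: "clp Q w \<in> set_pmf Q"
  unfolding clp_def using set_pmf_not_empty[of Q] by (auto intro: someI_ex)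

lemma clp_id: "w \<in> set_pmf Q \<Longrightarrow> clp Q w = w"
  unfolding clp_def by simp

lemma clp_image: "(\<lambda>w. V (clp Q w)) ` UNIV = V ` set_pmf Q"
proof (intro equalityI subsetI)
  fix y assume "y \<in> (\<lambda>w. V (clp Q w)) ` UNIV"
  then obtain w where "y = V (clp Q w)" by auto
  then show "y \<in> V ` set_pmf Q" using clp_in[of Q w] by blast
next
  fix y assume "y \<in> V ` set_pmf Q"
  then obtain w where "w \<in> set_pmf Q" "y = V w" by auto
  then show "y \<in> (\<lambda>w. V (clp Q w)) ` UNIV" by (metis clp_id rangeI)
qed

lemma clp_simple:
  assumes "finite (set_pmf Q)"
  shows "simple_function (measure_pmf Q) (\<lambda>w. V (clp Q w))"
  unfolding simple_function_def using assms by (simp add: clp_image)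

lemma clp_measure:
  "measure_pmf.prob Q ((\<lambda>w. V (clp Q w)) -` {t} \<inter> space (measure_pmf Q)) = pmf (map_pmf V Q) t"
proof -
  have "measure_pmf.prob Q ((\<lambda>w. V (clp Q w)) -` {t} \<inter> space (measure_pmf Q)) =
        measure_pmf.prob Q ((\<lambda>w. V (clp Q w)) -` {t} \<inter> set_pmf Q)"
    by (simp add: measure_Int_set_pmf)
  also have "\<dots> = measure_pmf.prob Q (V -` {t} \<inter> set_pmf Q)"
    by (intro arg_cong[where f="measure_pmf.prob Q"]) (auto simp: clp_id)
  also have "\<dots> = pmf (map_pmf V Q) t" by (simp add: measure_Int_set_pmf pmf_map)
  finally show ?thesis .
qed

lemma clp_measure':
  "measure_pmf.prob Q ((\<lambda>w. V (clp Q w)) -` {t}) = pmf (map_pmf V Q) t"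
  using clp_measure[of Q V t] by simp

lemma clp_sd:
  assumes "finite (set_pmf Q)"
  shows "simple_distributed (measure_pmf Q) (\<lambda>w. V (clp Q w)) (pmf (map_pmf V Q))"
  by (rule measure_pmf.simple_distributedI[OF clp_simple[OF assms]]) (simp_all add: clp_measure')

lemma Hrv_submod:
  assumes fin: "finite (set_pmf Q)"
  shows "Hrv Q (\<lambda>w. (X w, Y w, Z w)) + Hrv Q Z \<le> Hrv Q (\<lambda>w. (X w, Z w)) + Hrv Q (\<lambda>w. (Y w, Z w))"
proof -
  interpret information_space "measure_pmf Q" 2 by unfold_locales simp
  let ?c = "clp Q"
  define pxyz where "pxyz = pmf (map_pmf (\<lambda>w. (X w, Y w, Z w)) Q)"
  define pxz where "pxz = pmf (map_pmf (\<lambda>w. (X w, Z w)) Q)"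
  define pyz where "pyz = pmf (map_pmf (\<lambda>w. (Y w, Z w)) Q)"
  define pz where "pz = pmf (map_pmf Z Q)"
  have sX: "simple_function (measure_pmf Q) (\<lambda>w. X (?c w))" by (rule clp_simple[OF fin])
  have sY: "simple_function (measure_pmf Q) (\<lambda>w. Y (?c w))" by (rule clp_simple[OF fin])
  have sZ: "simple_function (measure_pmf Q) (\<lambda>w. Z (?c w))" by (rule clp_simple[OF fin])
  have Pz: "simple_distributed (measure_pmf Q) (\<lambda>w. Z (?c w)) pz"
    unfolding pz_def by (rule clp_sd[OF fin])
  have Pyz: "simple_distributed (measure_pmf Q) (\<lambda>w. (Y (?c w), Z (?c w))) pyz"
    unfolding pyz_def using clp_sd[OF fin, of "\<lambda>w. (Y w, Z w)"] by simp
  have Pxz: "simple_distributed (measure_pmf Q) (\<lambda>w. (X (?c w), Z (?c w))) pxz"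
    unfolding pxz_def using clp_sd[OF fin, of "\<lambda>w. (X w, Z w)"] by simp
  have Pxyz: "simple_distributed (measure_pmf Q) (\<lambda>w. (X (?c w), Y (?c w), Z (?c w))) pxyz"
    unfolding pxyz_def using clp_sd[OF fin, of "\<lambda>w. (X w, Y w, Z w)"] by simp
  have "0 \<le> (\<Sum>(x, y, z)\<in>(\<lambda>w. (X (?c w), Y (?c w), Z (?c w)))`space (measure_pmf Q).
      pxyz (x, y, z) * log 2 (pxyz (x, y, z) / (pxz (x, z) * (pyz (y,z) / pz z))))"
    using conditional_mutual_information_nonneg[OF sX sY sZ]
      conditional_mutual_information_eq[OF Pz Pyz Pxz Pxyz] by simp
  also have "\<dots> = (\<Sum>t\<in>(\<lambda>w. (X w, Y w, Z w)) ` set_pmf Q.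
      pxyz t * (\<lambda>(x,y,z). log 2 (pxyz (x, y, z) / (pxz (x, z) * (pyz (y,z) / pz z)))) t)"
    using clp_image[of "\<lambda>w. (X w, Y w, Z w)" Q]
    by (intro sum.cong) (auto simp: split_beta)
  also have "\<dots> = (\<Sum>w\<in>set_pmf Q. pmf Q w * log 2 (pxyz (X w, Y w, Z w) /
       (pxz (X w, Z w) * (pyz (Y w, Z w) / pz (Z w)))))"
    unfolding pxyz_def by (subst regroup[OF fin]) simp
  also have "\<dots> = (\<Sum>w\<in>set_pmf Q. pmf Q w * log 2 (pxyz (X w, Y w, Z w))
       - pmf Q w * log 2 (pxz (X w, Z w)) - pmf Q w * log 2 (pyz (Y w, Z w))
       + pmf Q w * log 2 (pz (Z w)))"
  proof (intro sum.cong refl)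
    fix w assume w: "w \<in> set_pmf Q"
    have p1: "0 < pxyz (X w, Y w, Z w)" unfolding pxyz_def using pmf_map_pos[OF w, of "\<lambda>w. (X w, Y w, Z w)"] by simp
    have p2: "0 < pxz (X w, Z w)" unfolding pxz_def using pmf_map_pos[OF w, of "\<lambda>w. (X w, Z w)"] by simp
    have p3: "0 < pyz (Y w, Z w)" unfolding pyz_def using pmf_map_pos[OF w, of "\<lambda>w. (Y w, Z w)"] by simp
    have p4: "0 < pz (Z w)" unfolding pz_def using pmf_map_pos[OF w, of Z] by simp
    show "pmf Q w * log 2 (pxyz (X w, Y w, Z w) / (pxz (X w, Z w) * (pyz (Y w, Z w) / pz (Z w)))) =
      pmf Q w * log 2 (pxyz (X w, Y w, Z w)) - pmf Q w * log 2 (pxz (X w, Z w)) -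
      pmf Q w * log 2 (pyz (Y w, Z w)) + pmf Q w * log 2 (pz (Z w))"
      using p1 p2 p3 p4 by (simp add: log_divide log_mult algebra_simps)
  qed
  also have "\<dots> = - Hrv Q (\<lambda>w. (X w, Y w, Z w)) + Hrv Q (\<lambda>w. (X w, Z w)) + Hrv Q (\<lambda>w. (Y w, Z w)) - Hrv Q Z"
    unfolding Hrv_sum[OF fin] pxyz_def pxz_def pyz_def pz_def
    by (simp add: sum.distrib sum_subtractf)
  finally show ?thesis by simp
qed

lemma Hrv_subadd:
  assumes fin: "finite (set_pmf Q)"
  shows "Hrv Q (\<lambda>w. (X w, Y w)) \<le> Hrv Q X + Hrv Q Y"
proof -
  have "Hrv Q (\<lambda>w. (X w, Y w, ())) + Hrv Q (\<lambda>w. ()) \<le> Hrv Q (\<lambda>w. (X w, ())) + Hrv Q (\<lambda>w. (Y w, ()))"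
    by (rule Hrv_submod[OF fin])
  moreover have "Hrv Q (\<lambda>w. (X w, Y w, ())) = Hrv Q (\<lambda>w. (X w, Y w))"
    by (rule Hrv_eq_fun[of Q "\<lambda>w. (X w, Y w, ())" "\<lambda>t. (fst t, snd t, ())" "\<lambda>w. (X w, Y w)" "\<lambda>t. (fst t, fst (snd t))"]) (simp_all add: fin)
  moreover have "Hrv Q (\<lambda>w. (X w, ())) = Hrv Q X"
    by (rule Hrv_eq_fun[of Q "\<lambda>w. (X w, ())" "\<lambda>a. (a,())" X fst]) (simp_all add: fin)
  moreover have "Hrv Q (\<lambda>w. (Y w, ())) = Hrv Q Y"
    by (rule Hrv_eq_fun[of Q "\<lambda>w. (Y w, ())" "\<lambda>a. (a,())" Y fst]) (simp_all add: fin)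
  moreover have "Hrv Q (\<lambda>w. ()) = 0" by (rule Hrv_const)
  ultimately show ?thesis by linarith
qed



lemma ent_map_inj:
  assumes fin: "finite (set_pmf p)" and inj: "inj_on f (set_pmf p)"
  shows "ent (map_pmf f p) = ent p"
proof -
  have "Hrv p f = Hrv p (\<lambda>x. x)"
    by (rule Hrv_eq_fun[of p f f "\<lambda>x. x" "the_inv_into (set_pmf p) f"])
       (use fin inj in \<open>auto simp: the_inv_into_f_f\<close>)
  then show ?thesis by (simp add: Hrv_def)
qed

lemma ent_pair:
  assumes fp: "finite (set_pmf p)" and fq: "finite (set_pmf q)"
  shows "ent (pair_pmf p q) = ent p + ent q"
proof -
  have sp: "sum (pmf p) (set_pmf p) = 1" using fp by (simp add: sum_pmf_eq_1)
  have sq: "sum (pmf q) (set_pmf q) = 1" using fq by (simp add: sum_pmf_eq_1)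
  have "ent (pair_pmf p q) = - (\<Sum>x\<in>set_pmf p \<times> set_pmf q. pmf p (fst x) * pmf q (snd x) *
          (log 2 (pmf p (fst x)) + log 2 (pmf q (snd x))))"
    unfolding ent_def
    by (intro arg_cong[where f=uminus] sum.cong) (auto simp: pmf_pair log_mult pmf_positive)
  also have "\<dots> = - ((\<Sum>a\<in>set_pmf p. \<Sum>b\<in>set_pmf q. pmf p a * pmf q b * log 2 (pmf p a)) +
                     (\<Sum>a\<in>set_pmf p. \<Sum>b\<in>set_pmf q. pmf p a * pmf q b * log 2 (pmf q b)))"
    by (simp add: sum.cartesian_product split_beta distrib_left sum.distrib)
  also have "(\<Sum>a\<in>set_pmf p. \<Sum>b\<in>set_pmf q. pmf p a * pmf q b * log 2 (pmf p a)) =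
       (\<Sum>a\<in>set_pmf p. pmf p a * log 2 (pmf p a))"
    by (simp add: sum_distrib_left[symmetric] sum_distrib_right[symmetric] mult.commute[of "pmf q _"] mult.assoc sq
        flip: sum_distrib_right)
  also have "(\<Sum>a\<in>set_pmf p. \<Sum>b\<in>set_pmf q. pmf p a * pmf q b * log 2 (pmf q b)) =
       (\<Sum>b\<in>set_pmf q. pmf q b * log 2 (pmf q b))"
    by (subst sum.swap) (simp add: mult.assoc sum_distrib_left[symmetric] sp flip: sum_distrib_right)
  finally show ?thesis unfolding ent_def by simp
qed

lemma pair_pmf_of_set:
  assumes "finite A" "A \<noteq> {}" "finite B" "B \<noteq> {}"
  shows "pair_pmf (pmf_of_set A) (pmf_of_set B) = pmf_of_set (A \<times> B)"
proof (rule pmf_eqI)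
  fix x :: "'a \<times> 'b"
  obtain a b where x: "x = (a, b)" by (cases x)
  have "A \<times> B \<noteq> {}" "finite (A \<times> B)" using assms by auto
  then show "pmf (pair_pmf (pmf_of_set A) (pmf_of_set B)) x = pmf (pmf_of_set (A \<times> B)) x"
    unfolding x using assms by (simp add: pmf_pair card_cartesian_product indicator_def)
qed

lemma ent_uniform:
  assumes "finite A" "A \<noteq> {}"
  shows "ent (pmf_of_set A) = log 2 (real (card A))"
proof -
  have "ent (pmf_of_set A) = - (\<Sum>x\<in>A. (1 / real (card A)) * log 2 (1 / real (card A)))"
    unfolding ent_def using assms by (intro arg_cong[where f=uminus] sum.cong) auto
  also have "\<dots> = log 2 (real (card A))"
    using assms by (simp add: log_divide card_gt_0_iff)
  finally show ?thesis .
qed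

lemma Hrv_pair_fun:
  assumes "finite A" "A \<noteq> {}" "finite B" "B \<noteq> {}"
  shows "Hrv (pmf_of_set (A \<times> B)) (\<lambda>x. (f (fst x), g (snd x))) = Hrv (pmf_of_set A) f + Hrv (pmf_of_set B) g"
proof -
  have "map_pmf (\<lambda>x. (f (fst x), g (snd x))) (pmf_of_set (A \<times> B)) =
        pair_pmf (map_pmf f (pmf_of_set A)) (map_pmf g (pmf_of_set B))"
  proof -
    have e: "(\<lambda>x. (f (fst x), g (snd x))) = (\<lambda>(a, b). (f a, g b))" by auto
    show ?thesis unfolding e using map_pair[of f g "pmf_of_set A" "pmf_of_set B"] pair_pmf_of_set[OF assms]
      by simp
  qed
  then show ?thesis unfolding Hrv_def
    using assms by (simp add: ent_pair set_map_pmf)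
qed

lemma Hrv_fst_uniform:
  assumes "finite A" "A \<noteq> {}" "finite B" "B \<noteq> {}"
  shows "Hrv (pmf_of_set (A \<times> B)) (\<lambda>x. f (fst x)) = Hrv (pmf_of_set A) f"
proof -
  have "map_pmf (\<lambda>x. f (fst x)) (pmf_of_set (A \<times> B)) = map_pmf f (pmf_of_set A)"
  proof -
    have "map_pmf (\<lambda>x. f (fst x)) (pmf_of_set (A \<times> B)) = map_pmf f (map_pmf fst (pair_pmf (pmf_of_set A) (pmf_of_set B)))"
      by (simp add: map_pmf_comp pair_pmf_of_set[OF assms])
    then show ?thesis by (simp only: map_fst_pair_pmf)
  qed
  then show ?thesis unfolding Hrv_def by simp
qed

lemma Hrv_snd_uniform:
  assumes "finite A" "A \<noteq> {}" "finite B" "B \<noteq> {}"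
  shows "Hrv (pmf_of_set (A \<times> B)) (\<lambda>x. g (snd x)) = Hrv (pmf_of_set B) g"
proof -
  have "map_pmf (\<lambda>x. g (snd x)) (pmf_of_set (A \<times> B)) = map_pmf g (pmf_of_set B)"
  proof -
    have "map_pmf (\<lambda>x. g (snd x)) (pmf_of_set (A \<times> B)) = map_pmf g (map_pmf snd (pair_pmf (pmf_of_set A) (pmf_of_set B)))"
      by (simp add: map_pmf_comp pair_pmf_of_set[OF assms])
    then show ?thesis by (simp only: map_snd_pair_pmf)
  qed
  then show ?thesis unfolding Hrv_def by simp
qed

lemma PiE_dflt_undefined: "PiE_dflt S undefined A = PiE S A"
  by (auto simp: PiE_dflt_def PiE_def extensional_def)

lemma Hrv_marg:
  assumes "finite S" "\<And>s. s \<in> S \<Longrightarrow> finite (A s)" "\<And>s. s \<in> S \<Longrightarrow> A s \<noteq> {}" "s \<in> S"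
  shows "Hrv (pmf_of_set (PiE S A)) (\<lambda>w. \<psi> (w s)) = Hrv (pmf_of_set (A s)) \<psi>"
proof -
  have "pmf_of_set (PiE S A) = Pi_pmf S undefined (\<lambda>s. pmf_of_set (A s))"
    using Pi_pmf_of_set[of S A undefined] assms by (simp add: PiE_dflt_undefined)
  then have "map_pmf (\<lambda>w. w s) (pmf_of_set (PiE S A)) = pmf_of_set (A s)"
    using Pi_pmf_component[of S s undefined "\<lambda>s. pmf_of_set (A s)"] assms by simp
  moreover have "map_pmf (\<lambda>w. \<psi> (w s)) (pmf_of_set (PiE S A)) = map_pmf \<psi> (map_pmf (\<lambda>w. w s) (pmf_of_set (PiE S A)))"
    by (simp add: map_pmf_comp)
  ultimately show ?thesis unfolding Hrv_def by simp
qed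

lemma Hrv_PiE:
  fixes \<phi> :: "'s \<Rightarrow> 'a \<Rightarrow> 'b"
  assumes "finite S" "\<And>s. s \<in> S \<Longrightarrow> finite (A s)" "\<And>s. s \<in> S \<Longrightarrow> A s \<noteq> {}"
  shows "Hrv (pmf_of_set (PiE S A)) (\<lambda>w. restrict (\<lambda>s. \<phi> s (w s)) S) = (\<Sum>s\<in>S. Hrv (pmf_of_set (A s)) (\<phi> s))"
  using assms
proof (induction S rule: finite_induct)
  case empty
  have "(\<lambda>w. restrict (\<lambda>s. \<phi> s (w s)) {}) = (\<lambda>w. (\<lambda>s. undefined))" by (simp add: fun_eq_iff)
  then show ?case by (simp add: Hrv_const)
next
  case (insert x F)
  define upd where "upd = (\<lambda>(y::'a, g::'s \<Rightarrow> 'a). g(x := y))"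
  have finF: "finite (PiE F A)" using insert by (simp add: finite_PiE)
  have neF: "PiE F A \<noteq> {}" using insert by (simp add: PiE_eq_empty_iff)
  have fx: "finite (A x)" "A x \<noteq> {}" using insert by auto
  have inj: "inj_on upd (A x \<times> PiE F A)"
  proof (rule inj_onI)
    fix u v assume u: "u \<in> A x \<times> PiE F A" and v: "v \<in> A x \<times> PiE F A" and e: "upd u = upd v"
    obtain y g where u': "u = (y, g)" by (cases u)
    obtain y' g' where v': "v = (y', g')" by (cases v)
    have gx: "g x = undefined" "g' x = undefined" using u v insert.hyps(2) unfolding u' v' by (auto simp: PiE_def extensional_def)
    have "y = y'" using e unfolding u' v' upd_def by (metis fun_upd_same old.prod.case)
    moreover have "g = g'"
    proof
      fix z show "g z = g' z"
        using e gx unfolding u' v' upd_def by (cases "z = x") (auto dest: fun_cong[where x=z])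
    qed
    ultimately show "u = v" using u' v' by simp
  qed
  have img: "upd ` (A x \<times> PiE F A) = PiE (insert x F) A"
    unfolding upd_def by (simp add: PiE_insert_eq)
  have P: "pmf_of_set (PiE (insert x F) A) = map_pmf upd (pmf_of_set (A x \<times> PiE F A))"
    using map_pmf_of_set_inj[OF inj] img fx finF neF by simp
  let ?G = "\<lambda>w. restrict (\<lambda>s. \<phi> s (w s)) (insert x F)"
  let ?GF = "\<lambda>w. restrict (\<lambda>s. \<phi> s (w s)) F"
  have "Hrv (pmf_of_set (PiE (insert x F) A)) ?G = Hrv (pmf_of_set (A x \<times> PiE F A)) (\<lambda>z. ?G (upd z))"
    unfolding P Hrv_def by (simp add: map_pmf_comp)
  also have "\<dots> = Hrv (pmf_of_set (A x \<times> PiE F A)) (\<lambda>z. (\<phi> x (fst z), ?GF (snd z)))"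
  proof (rule Hrv_eq_fun[of "pmf_of_set (A x \<times> PiE F A)" "\<lambda>z. ?G (upd z)" "\<lambda>(a, t). t(x := a)" "\<lambda>z. (\<phi> x (fst z), ?GF (snd z))" "\<lambda>t. (t x, restrict t F)"])
    show "finite (set_pmf (pmf_of_set (A x \<times> PiE F A)))" using fx finF neF by simp
  next
    fix z assume z: "z \<in> set_pmf (pmf_of_set (A x \<times> PiE F A))"
    obtain y g where z': "z = (y, g)" by (cases z)
    have g: "g \<in> PiE F A" using z fx finF neF unfolding z' by simp
    show "?G (upd z) = (case (\<phi> x (fst z), ?GF (snd z)) of (a, t) \<Rightarrow> t(x := a))"
      unfolding z' upd_def using insert.hyps(2) by (auto simp: fun_eq_iff restrict_def)
    show "(\<phi> x (fst z), ?GF (snd z)) = (?G (upd z) x, restrict (?G (upd z)) F)"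
      unfolding z' upd_def using insert.hyps(2) by (auto simp: fun_eq_iff restrict_def)
  qed
  also have "\<dots> = Hrv (pmf_of_set (A x)) (\<phi> x) + Hrv (pmf_of_set (PiE F A)) ?GF"
    by (rule Hrv_pair_fun[OF fx finF neF])
  also have "Hrv (pmf_of_set (PiE F A)) ?GF = (\<Sum>s\<in>F. Hrv (pmf_of_set (A s)) (\<phi> s))"
    by (rule insert.IH) (use insert.prems in auto)
  finally show ?case using insert.hyps by simp
qed

lemma ent_opt_bound:
  fixes p :: "'a option pmf"
  assumes fin: "finite (set_pmf p)" and A: "finite A" "A \<noteq> {}" "set_pmf p \<subseteq> insert None (Some ` A)"
  shows "ent p \<le> 1 + (1 - pmf p None) * log 2 (real (card A))"
proof -
  define S where "S = set_pmf p"
  define T where "T = S - {None}"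
  define q where "q = sum (pmf p) T"
  have s1: "sum (pmf p) S = 1" unfolding S_def using fin by (simp add: sum_pmf_eq_1)
  have finT: "finite T" unfolding T_def S_def using fin by simp
  have cA: "1 \<le> card A" using A by (simp add: Suc_le_eq card_gt_0_iff)
  have logA: "0 \<le> log 2 (real (card A))" using cA by simp
  have entS: "ent p = (\<Sum>x\<in>S. pmf p x * log 2 (1 / pmf p x))"
    unfolding ent_def S_def
    by (simp add: sum_negf[symmetric] log_divide set_pmf_eq' pmf_pos del: set_pmf_iff)
  have p0q: "pmf p None + q = 1"
  proof (cases "None \<in> S")
    case True
    then show ?thesis using s1 fin unfolding q_def T_def S_def by (simp add: sum.remove)
  next
    case False
    then have "T = S" "pmf p None = 0" unfolding T_def S_def by (auto simp: set_pmf_eq)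
    then show ?thesis using s1 unfolding q_def by simp
  qed
  show ?thesis
  proof (cases "T = {}")
    case True
    then have "S \<subseteq> {None}" unfolding T_def by auto
    moreover have "S \<noteq> {}" unfolding S_def by (rule set_pmf_not_empty)
    ultimately have SN: "S = {None}" by auto
    then have "pmf p None = 1" using s1 by simp
    then have "ent p \<le> 0" unfolding entS SN by simp
    moreover have "0 \<le> (1 - pmf p None) * log 2 (real (card A))"
      using logA pmf_le_1[of p None] by simp
    ultimately show ?thesis by linarith
  next
    case False
    have posT: "\<And>x. x \<in> T \<Longrightarrow> 0 < pmf p x" unfolding T_def S_def by (simp add: pmf_positive)
    have qpos: "0 < q" unfolding q_def using False finT posT by (simp add: sum_pos)
    have cardT: "card T \<le> card A"
    proof -
      have "T \<subseteq> Some ` A" unfolding T_def S_def using A by auto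
      then have "card T \<le> card (Some ` A)" using A by (intro card_mono) auto
      also have "\<dots> = card A" by (simp add: card_image)
      finally show ?thesis .
    qed
    have cT: "0 < card T" using False finT by (simp add: card_gt_0_iff)
    have tT: "(\<Sum>x\<in>T. pmf p x * log 2 (1 / pmf p x)) \<le> q * log 2 (real (card T) / q)"
      unfolding q_def by (rule tangent_sum[OF finT posT False])
    also have "\<dots> = q * log 2 (real (card T)) + q * log 2 (1 / q)"
      using qpos cT by (simp add: log_divide algebra_simps)
    also have "\<dots> \<le> q * log 2 (real (card A)) + q * log 2 (1 / q)"
      using cardT cT qpos by (intro add_right_mono mult_left_mono) auto
    finally have tT': "(\<Sum>x\<in>T. pmf p x * log 2 (1 / pmf p x)) \<le> q * log 2 (real (card A)) + q * log 2 (1 / q)" .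
    show ?thesis
    proof (cases "None \<in> S")
      case True
      have Sd: "S = insert None T" using True unfolding T_def by auto
      have p0: "0 < pmf p None" using True unfolding S_def by (simp add: pmf_positive)
      have bin: "pmf p None * log 2 (1 / pmf p None) + q * log 2 (1 / q) \<le> 1"
      proof -
        define w where "w = (\<lambda>b::bool. if b then pmf p None else q)"
        have "(\<Sum>b\<in>UNIV. w b * log 2 (1 / w b)) \<le> sum w UNIV * log 2 (real (card (UNIV :: bool set)) / sum w UNIV)"
          by (rule tangent_sum) (auto simp: w_def p0 qpos)
        moreover have "sum w UNIV = 1" using p0q by (simp add: w_def UNIV_bool)
        ultimately show ?thesis by (simp add: w_def UNIV_bool add.commute)
      qed
      have "ent p = pmf p None * log 2 (1 / pmf p None) + (\<Sum>x\<in>T. pmf p x * log 2 (1 / pmf p x))"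
        unfolding entS using fin True unfolding T_def S_def by (simp add: sum.remove)
      also have "\<dots> \<le> 1 + q * log 2 (real (card A))" using tT' bin by linarith
      moreover have "q = 1 - pmf p None" using p0q by simp
      ultimately show ?thesis by simp
    next
      case False
      then have "T = S" "pmf p None = 0" unfolding T_def S_def by (auto simp: set_pmf_eq)
      then have "q = 1" using s1 unfolding q_def by simp
      then show ?thesis using tT' \<open>T = S\<close> \<open>pmf p None = 0\<close> unfolding entS by simp
    qed
  qed
qed

lemma Hrv_dp:
  assumes fin: "finite (set_pmf Q)"
  shows "Hrv Q (\<lambda>w. f (X w)) + Hrv Q Y - Hrv Q (\<lambda>w. (f (X w), Y w)) \<le> Hrv Q X + Hrv Q Y - Hrv Q (\<lambda>w. (X w, Y w))"
proof -
  have sm: "Hrv Q (\<lambda>w. (X w, Y w, f (X w))) + Hrv Q (\<lambda>w. f (X w)) \<le> Hrv Q (\<lambda>w. (X w, f (X w))) + Hrv Q (\<lambda>w. (Y w, f (X w)))"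
    by (rule Hrv_submod[OF fin])
  have e1: "Hrv Q (\<lambda>w. (X w, Y w, f (X w))) = Hrv Q (\<lambda>w. (X w, Y w))"
    by (rule Hrv_eq_fun[of Q _ "\<lambda>(a,b). (a,b,f a)" _ "\<lambda>(a,b,c). (a,b)"]) (auto simp: fin)
  have e2: "Hrv Q (\<lambda>w. (X w, f (X w))) = Hrv Q X"
    by (rule Hrv_eq_fun[of Q _ "\<lambda>a. (a, f a)" _ "fst"]) (auto simp: fin)
  have e3: "Hrv Q (\<lambda>w. (Y w, f (X w))) = Hrv Q (\<lambda>w. (f (X w), Y w))"
    by (rule Hrv_eq_fun[of Q _ "\<lambda>(a,b). (b,a)" _ "\<lambda>(a,b). (b,a)"]) (auto simp: fin)
  show ?thesis using sm e1 e2 e3 by linarith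
qed

lemma fano_cond:
  assumes fin: "finite (set_pmf Q)" and A: "finite A" "A \<noteq> {}" and XA: "\<And>w. w \<in> set_pmf Q \<Longrightarrow> X w \<in> A"
  shows "Hrv Q (\<lambda>w. (X w, Y w)) \<le> Hrv Q Y + 1 + measure_pmf.prob Q {w. X w \<noteq> g (Y w)} * log 2 (real (card A))"
proof -
  define Z where "Z = (\<lambda>w. if X w = g (Y w) then None else Some (X w))"
  have "Hrv Q (\<lambda>w. (X w, Y w)) \<le> Hrv Q (\<lambda>w. (Z w, Y w))"
    by (rule Hrv_le_fun[OF fin, where f="\<lambda>(z, y). (case z of None \<Rightarrow> g y | Some x \<Rightarrow> x, y)"])
       (auto simp: Z_def)
  also have "\<dots> \<le> Hrv Q Z + Hrv Q Y" by (rule Hrv_subadd[OF fin])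
  also have "Hrv Q Z \<le> 1 + (1 - pmf (map_pmf Z Q) None) * log 2 (real (card A))"
    unfolding Hrv_def
    by (rule ent_opt_bound) (use fin A XA in \<open>auto simp: Z_def set_map_pmf\<close>)
  also have "1 - pmf (map_pmf Z Q) None = measure_pmf.prob Q {w. X w \<noteq> g (Y w)}"
  proof -
    have "pmf (map_pmf Z Q) None = measure_pmf.prob Q {w. X w = g (Y w)}"
      by (simp add: pmf_map Z_def vimage_def)
    moreover have "measure_pmf.prob Q {w. X w \<noteq> g (Y w)} = 1 - measure_pmf.prob Q {w. X w = g (Y w)}"
      using measure_pmf.prob_compl[of "{w. X w = g (Y w)}" Q] by (simp add: Compl_eq_Diff_UNIV[symmetric] Collect_neg_eq[symmetric])
    ultimately show ?thesis by simp
  qed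
  finally show ?thesis by simp
qed



lemma sort_construction:
  fixes X :: "'x set" and w :: "'x \<Rightarrow> 'v" and \<mu> :: "'x \<Rightarrow> nat" and B F :: nat
  assumes finX: "finite X" and cardF: "\<And>m. m < B \<Longrightarrow> card {x\<in>X. \<mu> x = m} = F"
  shows "\<exists>\<beta> J g. (\<forall>m<B. bij_betw (\<beta> m) {..<F} {x\<in>X. \<mu> x = m}) \<and>
                (\<forall>m<B. \<forall>i<F. w (\<beta> m i) = g m (J i)) \<and>
                card ((J :: nat \<Rightarrow> nat) ` {..<F}) \<le> B * card (w ` X) + 1"
proof -
  obtain rk :: "'v \<Rightarrow> nat" and n where rk: "rk ` (w ` X) = {i. i < n}" "inj_on rk (w ` X)"
    using finite_imp_inj_to_nat_seg[of "w ` X"] finX by blast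
  define key where "key x = rk (w x)" for x
  have "\<exists>xs. m < B \<longrightarrow> (distinct xs \<and> set xs = {x\<in>X. \<mu> x = m} \<and> sorted (map key xs))" for m
  proof -
    obtain L where L: "set L = {x\<in>X. \<mu> x = m}" "distinct L"
      using finite_distinct_list[of "{x\<in>X. \<mu> x = m}"] finX by auto
    show ?thesis by (rule exI[of _ "sort_key key L"]) (simp add: L)
  qed
  then obtain xsf where xsf: "\<And>m. m < B \<Longrightarrow> distinct (xsf m) \<and> set (xsf m) = {x\<in>X. \<mu> x = m} \<and> sorted (map key (xsf m))"
    by metis
  have len: "length (xsf m) = F" if "m < B" for m
    using xsf[OF that] cardF[OF that] distinct_card by metis
  define \<beta> where "\<beta> m i = xsf m ! i" for m i
  have bij: "bij_betw (\<beta> m) {..<F} {x\<in>X. \<mu> x = m}" if "m < B" for m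
    unfolding \<beta>_def using xsf[OF that] len[OF that] by (intro bij_betw_nth) auto
  have \<beta>X: "\<beta> m i \<in> X" if "m < B" "i < F" for m i
    using bij[OF that(1)] that(2) by (auto dest: bij_betw_apply)
  define kk where "kk m i = key (\<beta> m i)" for m i
  have mono: "kk m i \<le> kk m j" if "m < B" "i \<le> j" "j < F" for m i j
  proof -
    have "map key (xsf m) ! i \<le> map key (xsf m) ! j"
      using xsf[OF that(1)] len[OF that(1)] that by (intro sorted_nth_mono) auto
    then show ?thesis using len[OF that(1)] that unfolding kk_def \<beta>_def by simp
  qed
  define Dm where "Dm m = {i. 0 < i \<and> i < F \<and> kk m (i - 1) \<noteq> kk m i}" for m
  have cardDm: "card (Dm m) \<le> card (w ` X)" if m: "m < B" for m
  proof -
    have "inj_on (kk m) (Dm m)"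
    proof (rule inj_onI)
      fix i i' assume i: "i \<in> Dm m" and i': "i' \<in> Dm m" and e: "kk m i = kk m i'"
      have lt: "kk m a < kk m b" if a: "a \<in> Dm m" and b: "b \<in> Dm m" and ab: "a < b" for a b
      proof -
        have "kk m a \<le> kk m (b - 1)" using a b ab m by (intro mono) (auto simp: Dm_def)
        moreover have "kk m (b - 1) \<le> kk m b" using b m by (intro mono) (auto simp: Dm_def)
        moreover have "kk m (b - 1) \<noteq> kk m b" using b by (auto simp: Dm_def)
        ultimately show ?thesis by linarith
      qed
      show "i = i'"
      proof (rule ccontr)
        assume "i \<noteq> i'"
        then have "i < i' \<or> i' < i" by linarith
        then show False using lt[OF i i'] lt[OF i' i] e by auto
      qed
    qed
    then have "card (Dm m) = card (kk m ` Dm m)" by (simp add: card_image)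
    also have "\<dots> \<le> card (key ` X)"
      using \<beta>X m finX by (intro card_mono) (auto simp: kk_def Dm_def)
    also have "key ` X = rk ` (w ` X)" unfolding key_def by auto
    also have "card (rk ` (w ` X)) \<le> card (w ` X)" by (rule card_image_le) (use finX in simp)
    finally show ?thesis .
  qed
  define D where "D = (\<Union>m<B. Dm m)"
  have finDm: "finite (Dm m)" for m unfolding Dm_def by simp
  have finD: "finite D" unfolding D_def using finDm by simp
  have cardD: "card D \<le> B * card (w ` X)"
  proof -
    have "card D \<le> (\<Sum>m<B. card (Dm m))" unfolding D_def by (rule card_UN_le) simp
    also have "\<dots> \<le> (\<Sum>m<B. card (w ` X))" by (rule sum_mono) (use cardDm in simp)
    finally show ?thesis by simp
  qed
  define J where "J i = card {j\<in>D. j \<le> i}" for i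
  have cardJ: "card (J ` {..<F}) \<le> B * card (w ` X) + 1"
  proof -
    have "J ` {..<F} \<subseteq> {..card D}" unfolding J_def using finD by (auto intro!: card_mono)
    then have "card (J ` {..<F}) \<le> card {..card D}" by (intro card_mono) auto
    then show ?thesis using cardD by simp
  qed
  have noD: "j \<notin> D" if "J i = J i'" "i \<le> i'" "i < j" "j \<le> i'" for i i' j
  proof
    assume j: "j \<in> D"
    have sub: "{j\<in>D. j \<le> i} \<subseteq> {j\<in>D. j \<le> i'}" using that by auto
    have jin: "j \<in> {j\<in>D. j \<le> i'}" using j \<open>j \<le> i'\<close> by simp
    have jnot: "j \<notin> {j\<in>D. j \<le> i}" using \<open>i < j\<close> by simp
    have "{j\<in>D. j \<le> i} \<noteq> {j\<in>D. j \<le> i'}"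
    proof
      assume eq: "{j\<in>D. j \<le> i} = {j\<in>D. j \<le> i'}"
      show False using jin jnot unfolding eq by simp
    qed
    then have "{j\<in>D. j \<le> i} \<subset> {j\<in>D. j \<le> i'}" using sub by auto
    then have "card {j\<in>D. j \<le> i} < card {j\<in>D. j \<le> i'}" using finD by (intro psubset_card_mono) auto
    then show False using that(1) unfolding J_def by simp
  qed
  have const: "kk m i = kk m i'" if m: "m < B" and J: "J i = J i'" and ii: "i \<le> i'" and i': "i' < F" for m i i'
  proof -
    have "kk m i = kk m k" if "i \<le> k" "k \<le> i'" for k
      using that
    proof (induction k rule: dec_induct)
      case base then show ?case by simp
    next
      case (step k)
      have "Suc k \<notin> D" using noD[OF J ii, of "Suc k"] step by auto
      then have "Suc k \<notin> Dm m" unfolding D_def using m by auto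
      then have "kk m k = kk m (Suc k)" using step i' unfolding Dm_def by auto
      then show ?case using step by simp
    qed
    then show ?thesis using ii by simp
  qed
  have wconst: "w (\<beta> m i) = w (\<beta> m i')" if m: "m < B" and J: "J i = J i'" and i: "i < F" and i': "i' < F" for m i i'
  proof -
    have "kk m i = kk m i'"
    proof (cases "i \<le> i'")
      case True then show ?thesis using const[OF m J True i'] by simp
    next
      case False then show ?thesis using const[OF m J[symmetric] _ i] by simp
    qed
    then have "rk (w (\<beta> m i)) = rk (w (\<beta> m i'))" unfolding kk_def key_def .
    then show ?thesis using rk(2) \<beta>X[OF m i] \<beta>X[OF m i'] by (auto dest: inj_onD)
  qed
  define g where "g m j = w (\<beta> m (SOME i. i < F \<and> J i = j))" for m j
  have gJ: "w (\<beta> m i) = g m (J i)" if "m < B" "i < F" for m i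
  proof -
    have "\<exists>i'. i' < F \<and> J i' = J i" using that by auto
    then have "(SOME i'. i' < F \<and> J i' = J i) < F \<and> J (SOME i'. i' < F \<and> J i' = J i) = J i"
      by (rule someI_ex)
    then obtain i0 where i0: "i0 = (SOME i'. i' < F \<and> J i' = J i)" "i0 < F" "J i0 = J i" by simp
    have "w (\<beta> m i) = w (\<beta> m i0)" by (rule wconst[OF that(1) i0(3)[symmetric] that(2) i0(2)])
    then show ?thesis unfolding g_def i0(1)[symmetric] .
  qed
  show ?thesis
    apply (rule exI[of _ \<beta>])
    apply (rule exI[of _ J])
    apply (rule exI[of _ g])
    using bij gJ cardJ by simp
qed



lemma compact_box:
  "compact (PiE UNIV (\<lambda>\<gamma>. if P \<gamma> then {0..(R::real)} else {0}) :: ('i \<Rightarrow> real) set)"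
proof -
  have "compactin (product_topology (\<lambda>_. euclidean) UNIV) (PiE UNIV (\<lambda>\<gamma>. if P \<gamma> then {0..(R::real)} else {0}))"
    by (subst compactin_PiE) auto
  then show ?thesis by (simp add: euclidean_product_topology)
qed

lemma nested_compact:
  fixes Fam :: "real \<Rightarrow> 'a::topological_space set"
  assumes K: "compact K" and cl: "\<And>d. 0 < d \<Longrightarrow> closed (Fam d)"
    and ne: "\<And>d. 0 < d \<Longrightarrow> Fam d \<inter> K \<noteq> {}"
    and mono: "\<And>d d'. 0 < d \<Longrightarrow> d \<le> d' \<Longrightarrow> Fam d \<subseteq> Fam d'"
  shows "\<exists>x\<in>K. \<forall>d>0. x \<in> Fam d"
proof -
  have "K \<inter> \<Inter>(Fam ` {0<..}) \<noteq> {}"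
  proof (rule compact_imp_fip[OF K])
    show "\<And>T. T \<in> Fam ` {0<..} \<Longrightarrow> closed T" using cl by auto
  next
    fix F' assume fin: "finite F'" and sub: "F' \<subseteq> Fam ` {0<..}"
    then obtain D where D: "D \<subseteq> {0<..}" "finite D" "F' = Fam ` D"
      by (metis finite_subset_image)
    show "K \<inter> \<Inter>F' \<noteq> {}"
    proof (cases "D = {}")
      case True
      then show ?thesis using D ne[of 1] by auto
    next
      case False
      define d0 where "d0 = Min D"
      have d0: "d0 \<in> D" "\<And>d. d \<in> D \<Longrightarrow> d0 \<le> d" unfolding d0_def using D False by auto
      have pos: "0 < d0" using d0 D by auto
      have "Fam d0 \<subseteq> Fam d" if "d \<in> D" for d using mono[OF pos d0(2)[OF that]] .
      then have "Fam d0 \<subseteq> \<Inter>F'" using D by auto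
      then show ?thesis using ne[OF pos] by auto
    qed
  qed
  then show ?thesis by auto
qed

lemma closed_conv_closed: "closed (closed_conv A)"
  unfolding closed_conv_def by (rule closed_Inter) auto

lemma closed_conv_sub: "A \<subseteq> C \<Longrightarrow> closed C \<Longrightarrow> convex_fun C \<Longrightarrow> closed_conv A \<subseteq> C"
  unfolding closed_conv_def by auto

lemma closed_conv_scale:
  assumes "x \<in> A" "(\<lambda>i. 0) \<in> A" "0 \<le> u" "u \<le> 1"
  shows "(\<lambda>i. u * x i) \<in> closed_conv A"
  unfolding closed_conv_def
proof
  fix C assume "C \<in> {C. A \<subseteq> C \<and> closed C \<and> convex_fun C}"
  then have C: "A \<subseteq> C" "convex_fun C" by auto
  have xC: "x \<in> C" and zC: "(\<lambda>i. 0) \<in> C" using C(1) assms(1,2) by auto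
  have cv: "\<forall>x\<in>C. \<forall>y\<in>C. \<forall>u::real. 0 \<le> u \<and> u \<le> 1 \<longrightarrow> (\<lambda>i. u * x i + (1 - u) * y i) \<in> C"
    using C(2) unfolding convex_fun_def .
  have "(\<lambda>i. u * x i + (1 - u) * (\<lambda>i. 0) i) \<in> C"
    using spec[OF bspec[OF bspec[OF cv xC] zC], of u] assms(3,4) by simp
  then show "(\<lambda>i. u * x i) \<in> C" by simp
qed

lemma closed_coord_le: "closed {h :: 'i \<Rightarrow> real. a * h A + b * h B + c * h C \<le> d}"
  by (intro closed_Collect_le continuous_intros continuous_on_product_coordinates)

lemma closed_coord_eq: "closed {h :: 'i \<Rightarrow> real. h A = c}"
  by (intro closed_Collect_eq continuous_intros continuous_on_product_coordinates)

lemma closed_HN: "closed (HN S E)"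
proof -
  have "HN S E = {h. h {} = 0} \<inter> (\<Inter>\<gamma>\<in>{\<gamma>. \<not> \<gamma> \<subseteq> labels S E}. {h. h \<gamma> = 0})"
    unfolding HN_def by auto
  also have "closed \<dots>" by (intro closed_Int closed_INT ballI closed_coord_eq)
  finally show ?thesis .
qed

lemma convex_HN: "convex_fun (HN S E)"
  unfolding convex_fun_def HN_def by auto

lemma entropic_HN: "entropic S E \<subseteq> HN S E"
  unfolding entropic_def by auto



lemma card_div_fiber:
  fixes D N m :: nat
  assumes "0 < D" "m < N"
  shows "card {a \<in> {1..N * D}. (a - 1) div D = m} = D"
proof -
  have eq: "{a \<in> {1..N * D}. (a - 1) div D = m} = (\<lambda>j. m * D + j + 1) ` {..<D}"
  proof (intro equalityI subsetI)
    fix a assume a: "a \<in> {a \<in> {1..N * D}. (a - 1) div D = m}"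
    then have dm: "(a - 1) div D = m" by simp
    have "a - 1 = (a - 1) div D * D + (a - 1) mod D" by (rule div_mult_mod_eq[symmetric])
    then have "a - 1 = m * D + (a - 1) mod D" unfolding dm .
    moreover have "(a - 1) mod D < D" using assms by simp
    ultimately show "a \<in> (\<lambda>j. m * D + j + 1) ` {..<D}" using a
      by (intro image_eqI[of _ _ "(a - 1) mod D"]) auto
  next
    fix a assume "a \<in> (\<lambda>j. m * D + j + 1) ` {..<D}"
    then obtain j where j: "j < D" "a = m * D + j + 1" by auto
    have "m * D + j + 1 \<le> (m + 1) * D" using j by simp
    also have "\<dots> \<le> N * D" using assms by (intro mult_right_mono) auto
    finally have "a \<le> N * D" using j by simp
    moreover have "(a - 1) div D = m" using j by simp
    ultimately show "a \<in> {a \<in> {1..N * D}. (a - 1) div D = m}" using j by simp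
  qed
  have "inj_on (\<lambda>j. m * D + j + 1) {..<D}" by (auto simp: inj_on_def)
  then show ?thesis unfolding eq by (simp add: card_image)
qed

locale codeloc =
  fixes V :: "'v set" and E :: "'e set" and tlv hdv :: "'e \<Rightarrow> 'v" and S T :: "'v set"
    and beta :: "'v \<Rightarrow> 'v set" and c :: "'e \<Rightarrow> real" and Aw :: "'e set set"
    and n :: nat and rm rk :: "'v \<Rightarrow> real" and Alph :: "'e \<Rightarrow> nat set"
    and W :: "'e \<Rightarrow> ('v \<Rightarrow> nat) \<times> ('v \<Rightarrow> nat) \<Rightarrow> nat" and r :: "'v \<Rightarrow> real"
  assumes net: "wiretap_network V E tlv hdv S T beta c Aw"
    and code: "is_code V E tlv hdv S T n rm rk Alph W"
begin

definition "\<Omega>0 = sample_space S n rm rk"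
definition "P = pmf_of_set \<Omega>0"
definition "aa s = nat \<lfloor>real n * rm s\<rfloor>"
definition "kb s = nat \<lfloor>real n * rk s\<rfloor>"
definition "bb s = min (aa s) (nat \<lceil>real n * r s\<rceil>)"
definition "BB s = (2::nat) ^ bb s"
definition "FF s = (2::nat) ^ (aa s - bb s) * 2 ^ kb s"
definition "XX s = idx_set n (rm s) \<times> idx_set n (rk s)"
definition "hdm s m = (m - 1) div 2 ^ (aa s - bb s)"
definition "fe e = (SOME f. \<forall>(m,k)\<in>\<Omega>0. W e (m,k) = f (m (tlv e), k (tlv e)))"
definition "wv s x = restrict (\<lambda>e. fe e x) (Out_edges E tlv s)"

definition sortP :: "'v \<Rightarrow> (nat \<Rightarrow> nat \<Rightarrow> nat \<times> nat) \<Rightarrow> (nat \<Rightarrow> nat) \<Rightarrow> (nat \<Rightarrow> nat \<Rightarrow> ('e \<Rightarrow> nat)) \<Rightarrow> bool" where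
  "sortP s \<beta> J g \<longleftrightarrow> (\<forall>m<BB s. bij_betw (\<beta> m) {..<FF s} {x\<in>XX s. hdm s (fst x) = m}) \<and>
                (\<forall>m<BB s. \<forall>i<FF s. wv s (\<beta> m i) = g m (J i)) \<and>
                card (J ` {..<FF s}) \<le> BB s * card (wv s ` XX s) + 1"

lemma finE: "finite E"
  using net unfolding wiretap_network_def by auto

lemma finS: "finite S"
proof -
  have "S \<subseteq> V" "finite V" using net unfolding wiretap_network_def by auto
  then show ?thesis by (rule finite_subset)
qed

lemma XX_eq: "XX s = {1..2 ^ aa s} \<times> {1..2 ^ kb s}"
  unfolding XX_def idx_set_def aa_def kb_def by simp

lemma finXX: "finite (XX s)" unfolding XX_eq by simp

lemma bb_le: "bb s \<le> aa s" unfolding bb_def by simp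

lemma fiber_card:
  assumes "m < BB s"
  shows "card {x\<in>XX s. hdm s (fst x) = m} = FF s"
proof -
  have "{x\<in>XX s. hdm s (fst x) = m} = {a \<in> {1..2 ^ bb s * 2 ^ (aa s - bb s)}. (a - 1) div 2 ^ (aa s - bb s) = m} \<times> {1..2 ^ kb s}"
    unfolding XX_eq hdm_def using bb_le[of s] by (auto simp flip: power_add)
  moreover have "card {a \<in> {1..2 ^ bb s * 2 ^ (aa s - bb s)}. (a - 1) div 2 ^ (aa s - bb s) = m} = 2 ^ (aa s - bb s)"
    by (rule card_div_fiber) (use assms in \<open>auto simp: BB_def\<close>)
  ultimately show ?thesis unfolding FF_def by (simp add: card_cartesian_product)
qed

lemma sortP_ex: "\<exists>\<beta> J g. sortP s \<beta> J g"
  unfolding sortP_def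
  by (rule sort_construction[where X="XX s" and \<mu>="\<lambda>x. hdm s (fst x)" and B="BB s" and F="FF s" and w="wv s", OF finXX fiber_card])

definition "sd s = (SOME t. sortP s (fst t) (fst (snd t)) (snd (snd t)))"
definition "\<beta> s = fst (sd s)"
definition "JJ s = fst (snd (sd s))"
definition "gg s = snd (snd (sd s))"

lemma sortP_sd: "sortP s (\<beta> s) (JJ s) (gg s)"
proof -
  obtain b J g where "sortP s b J g" using sortP_ex by blast
  then have "sortP s (fst (b, J, g)) (fst (snd (b, J, g))) (snd (snd (b, J, g)))" by simp
  then have "sortP s (fst (sd s)) (fst (snd (sd s))) (snd (snd (sd s)))"
    unfolding sd_def by (rule someI)
  then show ?thesis unfolding \<beta>_def JJ_def gg_def .
qed

lemma \<beta>_bij: "m < BB s \<Longrightarrow> bij_betw (\<beta> s m) {..<FF s} {x\<in>XX s. hdm s (fst x) = m}"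
  using sortP_sd[of s] unfolding sortP_def by blast

lemma \<beta>_g: "m < BB s \<Longrightarrow> i < FF s \<Longrightarrow> wv s (\<beta> s m i) = gg s m (JJ s i)"
  using sortP_sd[of s] unfolding sortP_def by blast

lemma JJ_card: "card (JJ s ` {..<FF s}) \<le> BB s * card (wv s ` XX s) + 1"
  using sortP_sd[of s] unfolding sortP_def by blast

lemma \<beta>_in: "m < BB s \<Longrightarrow> i < FF s \<Longrightarrow> \<beta> s m i \<in> XX s \<and> hdm s (fst (\<beta> s m i)) = m"
  using bij_betw_apply[OF \<beta>_bij] by blast

lemma hdm_lt: "x \<in> XX s \<Longrightarrow> hdm s (fst x) < BB s"
proof -
  assume x: "x \<in> XX s"
  then have "fst x - 1 < 2 ^ aa s" unfolding XX_eq by auto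
  also have "(2::nat) ^ aa s = 2 ^ bb s * 2 ^ (aa s - bb s)" using bb_le[of s] by (simp flip: power_add)
  finally show ?thesis unfolding hdm_def BB_def by (simp add: div_less_iff_less_mult)
qed

definition "phi s z = \<beta> s (fst z) (snd z)"

lemma phi_bij: "bij_betw (phi s) ({..<BB s} \<times> {..<FF s}) (XX s)"
proof -
  have inj: "inj_on (phi s) ({..<BB s} \<times> {..<FF s})"
  proof (rule inj_onI)
    fix z z' assume z: "z \<in> {..<BB s} \<times> {..<FF s}" and z': "z' \<in> {..<BB s} \<times> {..<FF s}"
      and e: "phi s z = phi s z'"
    have "fst z = fst z'" using \<beta>_in[of "fst z" s "snd z"] \<beta>_in[of "fst z'" s "snd z'"] z z' e
      unfolding phi_def by auto
    moreover have "snd z = snd z'"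
      using bij_betw_imp_inj_on[OF \<beta>_bij[of "fst z" s]] z z' e \<open>fst z = fst z'\<close>
      unfolding phi_def by (auto dest: inj_onD)
    ultimately show "z = z'" by (simp add: prod_eq_iff)
  qed
  have "phi s ` ({..<BB s} \<times> {..<FF s}) = XX s"
  proof (intro equalityI subsetI)
    fix x assume "x \<in> phi s ` ({..<BB s} \<times> {..<FF s})"
    then show "x \<in> XX s" using \<beta>_in unfolding phi_def by auto
  next
    fix x assume x: "x \<in> XX s"
    define m where "m = hdm s (fst x)"
    have m: "m < BB s" using hdm_lt[OF x] unfolding m_def .
    have "x \<in> \<beta> s m ` {..<FF s}" using \<beta>_bij[OF m] x unfolding bij_betw_def m_def by auto
    then obtain i where "i < FF s" "x = \<beta> s m i" by auto
    then show "x \<in> phi s ` ({..<BB s} \<times> {..<FF s})" using m unfolding phi_def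
      by (intro image_eqI[of _ _ "(m, i)"]) auto
  qed
  with inj show ?thesis unfolding bij_betw_def by simp
qed

definition "\<Omega>1 = PiE S (\<lambda>s. {..<BB s} \<times> {..<FF s})"
definition "Q = pmf_of_set \<Omega>1"
definition "tau w = (restrict (\<lambda>s. fst (phi s (w s))) S, restrict (\<lambda>s. snd (phi s (w s))) S)"

lemma FF_pos: "0 < FF s" unfolding FF_def by simp
lemma BB_pos: "0 < BB s" unfolding BB_def by simp

lemma fin\<Omega>1: "finite \<Omega>1" unfolding \<Omega>1_def using finS by (simp add: finite_PiE)
lemma ne\<Omega>1: "\<Omega>1 \<noteq> {}" unfolding \<Omega>1_def using FF_pos BB_pos by (auto simp: PiE_eq_empty_iff)

lemma \<Omega>0_eq: "\<Omega>0 = PiE S (\<lambda>s. idx_set n (rm s)) \<times> PiE S (\<lambda>s. idx_set n (rk s))"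
  unfolding \<Omega>0_def sample_space_def ..

lemma tau_bij: "bij_betw tau \<Omega>1 \<Omega>0"
proof -
  have inj: "inj_on tau \<Omega>1"
  proof (rule inj_onI)
    fix w w' assume w: "w \<in> \<Omega>1" and w': "w' \<in> \<Omega>1" and e: "tau w = tau w'"
    show "w = w'"
    proof
      fix s show "w s = w' s"
      proof (cases "s \<in> S")
        case True
        have "fst (phi s (w s)) = fst (phi s (w' s))" "snd (phi s (w s)) = snd (phi s (w' s))"
          using e True unfolding tau_def by (auto dest!: fun_cong[where x=s])
        then have "phi s (w s) = phi s (w' s)" by (simp add: prod_eq_iff)
        moreover have "w s \<in> {..<BB s} \<times> {..<FF s}" "w' s \<in> {..<BB s} \<times> {..<FF s}"
          using w w' True unfolding \<Omega>1_def by (auto simp: PiE_iff)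
        ultimately show ?thesis using bij_betw_imp_inj_on[OF phi_bij[of s]] by (auto dest: inj_onD)
      next
        case False
        then show ?thesis using w w' unfolding \<Omega>1_def by (auto simp: PiE_def extensional_def)
      qed
    qed
  qed
  have "tau ` \<Omega>1 = \<Omega>0"
  proof (intro equalityI subsetI)
    fix x assume "x \<in> tau ` \<Omega>1"
    then obtain w where w: "w \<in> \<Omega>1" "x = tau w" by auto
    have "phi s (w s) \<in> XX s" if "s \<in> S" for s
      using bij_betw_apply[OF phi_bij] w that unfolding \<Omega>1_def by (auto simp: PiE_iff)
    then show "x \<in> \<Omega>0" unfolding \<Omega>0_eq w tau_def XX_def by (auto simp: PiE_iff mem_Times_iff)
  next
    fix x assume x: "x \<in> \<Omega>0"
    obtain m k where mk: "x = (m, k)" by (cases x)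
    have mkS: "m \<in> PiE S (\<lambda>s. idx_set n (rm s))" "k \<in> PiE S (\<lambda>s. idx_set n (rk s))"
      using x unfolding \<Omega>0_eq mk by auto
    define w where "w = restrict (\<lambda>s. the_inv_into ({..<BB s} \<times> {..<FF s}) (phi s) (m s, k s)) S"
    have inX: "(m s, k s) \<in> XX s" if "s \<in> S" for s using mkS that unfolding XX_def by auto
    have wS: "w s \<in> {..<BB s} \<times> {..<FF s}" and pw: "phi s (w s) = (m s, k s)" if "s \<in> S" for s
      using the_inv_into_into[OF bij_betw_imp_inj_on[OF phi_bij[of s]], of "(m s, k s)"]
            f_the_inv_into_f_bij_betw[OF phi_bij[of s], of "(m s, k s)"] inX[OF that] that phi_bij[of s]
      unfolding w_def bij_betw_def by auto
    have "w \<in> \<Omega>1" unfolding \<Omega>1_def using wS by (auto simp: w_def)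
    moreover have "tau w = x"
      unfolding tau_def mk using pw mkS by (auto simp: fun_eq_iff PiE_def extensional_def)
    ultimately show "x \<in> tau ` \<Omega>1" by (metis imageI)
  qed
  with inj show ?thesis unfolding bij_betw_def by simp
qed

lemma map_tau: "map_pmf tau Q = P"
  unfolding Q_def P_def using map_pmf_of_set_bij_betw[OF tau_bij ne\<Omega>1 fin\<Omega>1] .

lemma set_Q: "set_pmf Q = \<Omega>1" unfolding Q_def using fin\<Omega>1 ne\<Omega>1 by simp
lemma finQ: "finite (set_pmf Q)" using set_Q fin\<Omega>1 by simp

lemma tau_in: "w \<in> \<Omega>1 \<Longrightarrow> tau w \<in> \<Omega>0"
  using bij_betw_apply[OF tau_bij] .

lemma tau_comp: "w \<in> \<Omega>1 \<Longrightarrow> s \<in> S \<Longrightarrow> (fst (tau w) s, snd (tau w) s) = \<beta> s (fst (w s)) (snd (w s))"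
  unfolding tau_def phi_def by simp

lemma w_in: "w \<in> \<Omega>1 \<Longrightarrow> s \<in> S \<Longrightarrow> fst (w s) < BB s \<and> snd (w s) < FF s"
  unfolding \<Omega>1_def by (auto simp: PiE_iff)

lemma hdm_tau: "w \<in> \<Omega>1 \<Longrightarrow> s \<in> S \<Longrightarrow> hdm s (fst (tau w) s) = fst (w s)"
  using tau_comp[of w s] \<beta>_in[of "fst (w s)" s "snd (w s)"] w_in[of w s] by (metis fst_conv)

lemma fe_prop:
  assumes "s \<in> S" "e \<in> Out_edges E tlv s" "x \<in> \<Omega>0"
  shows "W e x = fe e (fst x s, snd x s)"
proof -
  have tl: "tlv e = s" using assms unfolding Out_edges_def by simp
  have "\<exists>f. \<forall>(m,k)\<in>\<Omega>0. W e (m,k) = f (m s, k s)"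
    using code assms unfolding is_code_def \<Omega>0_def by blast
  then have ex: "\<exists>f. \<forall>(m,k)\<in>\<Omega>0. W e (m,k) = f (m (tlv e), k (tlv e))" by (simp add: tl)
  have "\<forall>(m,k)\<in>\<Omega>0. W e (m,k) = fe e (m (tlv e), k (tlv e))"
    unfolding fe_def by (rule someI_ex[OF ex])
  then show ?thesis using assms tl by (cases x) auto
qed

lemma W_src:
  assumes "w \<in> \<Omega>1" "s \<in> S" "e \<in> Out_edges E tlv s"
  shows "W e (tau w) = gg s (fst (w s)) (JJ s (snd (w s))) e"
proof -
  have "W e (tau w) = fe e (\<beta> s (fst (w s)) (snd (w s)))"
    using fe_prop[OF assms(2,3) tau_in[OF assms(1)]] tau_comp[OF assms(1,2)] by simp
  also have "\<dots> = wv s (\<beta> s (fst (w s)) (snd (w s))) e" unfolding wv_def using assms(3) by simp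
  also have "\<dots> = gg s (fst (w s)) (JJ s (snd (w s))) e" using \<beta>_g w_in[OF assms(1,2)] by simp
  finally show ?thesis .
qed

lemma W_mid:
  assumes "v \<in> V - (S \<union> T)" "e \<in> Out_edges E tlv v"
  obtains f where "\<And>w. w \<in> \<Omega>1 \<Longrightarrow> W e (tau w) = f (restrict (\<lambda>e'. W e' (tau w)) (In_edges E hdv v))"
proof -
  obtain f where "\<forall>x\<in>\<Omega>0. W e x = f (restrict (\<lambda>e'. W e' x) (In_edges E hdv v))"
    using code assms unfolding is_code_def \<Omega>0_def by blast
  then show ?thesis using that tau_in by blast
qed

end


context codeloc begin

definition "U w l = (case l of Msg s \<Rightarrow> fst (w s) | Key s \<Rightarrow> JJ s (snd (w s)) | Edg e \<Rightarrow> W e (tau w))"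
definition "LL = labels S E"
definition "hraw \<gamma> = (if \<gamma> \<subseteq> LL then Hrv Q (\<lambda>w. restrict (U w) \<gamma>) else 0)"

lemma H_eq:
  assumes "\<And>w. w \<in> \<Omega>1 \<Longrightarrow> X w = f (Y w)" "\<And>w. w \<in> \<Omega>1 \<Longrightarrow> Y w = g (X w)"
  shows "Hrv Q X = Hrv Q Y"
  by (rule Hrv_eq_fun[OF finQ]) (use assms set_Q in auto)

lemma H_le:
  assumes "\<And>w. w \<in> \<Omega>1 \<Longrightarrow> X w = f (Y w)"
  shows "Hrv Q X \<le> Hrv Q Y"
  by (rule Hrv_le_fun[OF finQ]) (use assms set_Q in auto)

lemma finLL: "finite LL" unfolding LL_def labels_def using finS finE by simp

lemma hraw_HN: "hraw \<in> HN S E"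
proof -
  have "hraw {} = 0"
  proof -
    have "(\<lambda>w. restrict (U w) {}) = (\<lambda>w. (\<lambda>_. undefined))" by (simp add: fun_eq_iff)
    then show ?thesis unfolding hraw_def by (simp add: Hrv_const)
  qed
  then show ?thesis unfolding HN_def hraw_def LL_def by auto
qed

lemma hraw_entropic: "hraw \<in> entropic S E"
proof -
  have "finite (set_pmf (map_pmf U Q))" using finQ by simp
  moreover have "hraw \<gamma> = ent (map_pmf (\<lambda>u. restrict u \<gamma>) (map_pmf U Q))" if "\<gamma> \<subseteq> labels S E" for \<gamma>
    using that unfolding hraw_def LL_def Hrv_def by (simp add: map_pmf_comp)
  ultimately show ?thesis unfolding entropic_def using hraw_HN by blast
qed

lemma A1_fin: "finite ({..<BB s} \<times> {..<FF s})" and A1_ne: "{..<BB s} \<times> {..<FF s} \<noteq> {}"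
  using BB_pos FF_pos by auto

lemma Q_PiE: "Q = pmf_of_set (PiE S (\<lambda>s. {..<BB s} \<times> {..<FF s}))"
  unfolding Q_def \<Omega>1_def ..

lemma H_msg: "s \<in> S \<Longrightarrow> hraw {Msg s} = Hrv (pmf_of_set {..<BB s}) (\<lambda>x. x)"
proof -
  assume s: "s \<in> S"
  have "hraw {Msg s} = Hrv Q (\<lambda>w. restrict (U w) {Msg s})"
    unfolding hraw_def LL_def labels_def using s by simp
  also have "\<dots> = Hrv Q (\<lambda>w. fst (w s))"
    by (rule H_eq[where f="\<lambda>x. (\<lambda>l. if l = Msg s then x else undefined)" and g="\<lambda>u. u (Msg s)"])
       (auto simp: U_def fun_eq_iff)
  also have "\<dots> = Hrv (pmf_of_set ({..<BB s} \<times> {..<FF s})) fst"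
    unfolding Q_PiE by (rule Hrv_marg[where \<psi>=fst]) (use finS s BB_pos FF_pos in auto)
  also have "\<dots> = Hrv (pmf_of_set {..<BB s}) (\<lambda>x. x)"
    using Hrv_fst_uniform[of "{..<BB s}" "{..<FF s}" "\<lambda>x. x"] BB_pos FF_pos by auto
  finally show ?thesis .
qed

lemma H_key: "s \<in> S \<Longrightarrow> hraw {Key s} = Hrv (pmf_of_set {..<FF s}) (JJ s)"
proof -
  assume s: "s \<in> S"
  have "hraw {Key s} = Hrv Q (\<lambda>w. restrict (U w) {Key s})"
    unfolding hraw_def LL_def labels_def using s by simp
  also have "\<dots> = Hrv Q (\<lambda>w. JJ s (snd (w s)))"
    by (rule H_eq[where f="\<lambda>x. (\<lambda>l. if l = Key s then x else undefined)" and g="\<lambda>u. u (Key s)"])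
       (auto simp: U_def fun_eq_iff)
  also have "\<dots> = Hrv (pmf_of_set ({..<BB s} \<times> {..<FF s})) (\<lambda>z. JJ s (snd z))"
    unfolding Q_PiE by (rule Hrv_marg[where \<psi>="\<lambda>z. JJ s (snd z)"]) (use finS s BB_pos FF_pos in auto)
  also have "\<dots> = Hrv (pmf_of_set {..<FF s}) (JJ s)"
    using Hrv_snd_uniform[of "{..<BB s}" "{..<FF s}" "JJ s"] BB_pos FF_pos by auto
  finally show ?thesis .
qed

lemma hraw_G1: "hraw \<in> Gamma1 S E"
proof -
  have sub: "Msg ` S \<union> Key ` S \<subseteq> LL" unfolding LL_def labels_def by auto
  have "hraw (Msg ` S \<union> Key ` S) = Hrv Q (\<lambda>w. restrict (U w) (Msg ` S \<union> Key ` S))"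
    unfolding hraw_def using sub by simp
  also have "\<dots> = Hrv Q (\<lambda>w. restrict (\<lambda>s. (fst (w s), JJ s (snd (w s)))) S)"
    by (rule H_eq[where f="\<lambda>t. restrict (\<lambda>l. case l of Msg s \<Rightarrow> fst (t s) | Key s \<Rightarrow> snd (t s) | Edg e \<Rightarrow> 0) (Msg ` S \<union> Key ` S)"
          and g="\<lambda>u. restrict (\<lambda>s. (u (Msg s), u (Key s))) S"])
       (auto simp: U_def fun_eq_iff restrict_def split: lbl.split)
  also have "\<dots> = (\<Sum>s\<in>S. Hrv (pmf_of_set ({..<BB s} \<times> {..<FF s})) (\<lambda>z. (fst z, JJ s (snd z))))"
    unfolding Q_PiE by (rule Hrv_PiE[where \<phi>="\<lambda>s z. (fst z, JJ s (snd z))"]) (use finS BB_pos FF_pos in auto)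
  also have "\<dots> = (\<Sum>s\<in>S. hraw {Msg s} + hraw {Key s})"
  proof (rule sum.cong[OF refl])
    fix s assume s: "s \<in> S"
    show "Hrv (pmf_of_set ({..<BB s} \<times> {..<FF s})) (\<lambda>z. (fst z, JJ s (snd z))) = hraw {Msg s} + hraw {Key s}"
      using Hrv_pair_fun[of "{..<BB s}" "{..<FF s}" "\<lambda>x. x" "JJ s"] BB_pos FF_pos H_msg[OF s] H_key[OF s]
      by auto
  qed
  finally show ?thesis unfolding Gamma1_def using hraw_HN by blast
qed

lemma Out_sub: "Out_edges E tlv s \<subseteq> E" unfolding Out_edges_def by auto
lemma In_sub: "In_edges E hdv s \<subseteq> E" unfolding In_edges_def by auto

lemma hraw_G2: "hraw \<in> Gamma2 S E tlv"
proof -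
  have "hraw ({Msg s, Key s} \<union> Edg ` Out_edges E tlv s) = hraw {Msg s, Key s}" if s: "s \<in> S" for s
  proof -
    let ?B = "{Msg s, Key s} \<union> Edg ` Out_edges E tlv s"
    have sub: "?B \<subseteq> LL" "{Msg s, Key s} \<subseteq> LL" unfolding LL_def labels_def using s Out_sub by auto
    have "Hrv Q (\<lambda>w. restrict (U w) ?B) = Hrv Q (\<lambda>w. restrict (U w) {Msg s, Key s})"
    proof (rule H_eq[where f="\<lambda>u. restrict (\<lambda>l. case l of Edg e \<Rightarrow> gg s (u (Msg s)) (u (Key s)) e | _ \<Rightarrow> u l) ?B"
          and g="\<lambda>u. restrict u {Msg s, Key s}"])
      fix w assume w: "w \<in> \<Omega>1"
      show "restrict (U w) ?B = restrict (\<lambda>l. case l of Edg e \<Rightarrow> gg s (restrict (U w) {Msg s, Key s} (Msg s)) (restrict (U w) {Msg s, Key s} (Key s)) e | _ \<Rightarrow> restrict (U w) {Msg s, Key s} l) ?B"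
        using W_src[OF w s] by (auto simp: fun_eq_iff U_def restrict_def split: lbl.split)
      show "restrict (U w) {Msg s, Key s} = restrict (restrict (U w) ?B) {Msg s, Key s}"
        by (auto simp: fun_eq_iff restrict_def)
    qed
    then show ?thesis unfolding hraw_def using sub by simp
  qed
  then show ?thesis unfolding Gamma2_def using hraw_HN by blast
qed

definition "fm v e = (SOME f. \<forall>w\<in>\<Omega>1. W e (tau w) = f (restrict (\<lambda>e'. W e' (tau w)) (In_edges E hdv v)))"

lemma fm_prop:
  assumes "v \<in> V - (S \<union> T)" "e \<in> Out_edges E tlv v" "w \<in> \<Omega>1"
  shows "W e (tau w) = fm v e (restrict (\<lambda>e'. W e' (tau w)) (In_edges E hdv v))"
proof -
  obtain f where "\<And>w. w \<in> \<Omega>1 \<Longrightarrow> W e (tau w) = f (restrict (\<lambda>e'. W e' (tau w)) (In_edges E hdv v))"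
    using W_mid[OF assms(1,2)] by blast
  then have ex: "\<exists>f. \<forall>w\<in>\<Omega>1. W e (tau w) = f (restrict (\<lambda>e'. W e' (tau w)) (In_edges E hdv v))" by blast
  show ?thesis using someI_ex[OF ex] assms(3) unfolding fm_def by blast
qed

lemma hraw_G3: "hraw \<in> Gamma3 V E tlv hdv S T"
proof -
  have "hraw (Edg ` (In_edges E hdv v \<union> Out_edges E tlv v)) = hraw (Edg ` In_edges E hdv v)"
    if v: "v \<in> V - (S \<union> T)" for v
  proof -
    let ?I = "In_edges E hdv v" and ?O = "Out_edges E tlv v"
    let ?B = "Edg ` (?I \<union> ?O)"
    have IO: "?I \<union> ?O \<subseteq> E" using In_sub[of v] Out_sub[of v] by simp
    have e1: "?B \<subseteq> Edg ` E" using IO by (intro image_mono) simp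
    have e2: "Edg ` ?I \<subseteq> Edg ` E" using IO by (intro image_mono) simp
    have sub: "?B \<subseteq> LL" "Edg ` ?I \<subseteq> LL" unfolding LL_def labels_def using e1 e2 by auto
    have "Hrv Q (\<lambda>w. restrict (U w) ?B) = Hrv Q (\<lambda>w. restrict (U w) (Edg ` ?I))"
    proof (rule H_eq[where f="\<lambda>u. restrict (\<lambda>l. case l of Edg e \<Rightarrow> (if e \<in> ?I then u l else fm v e (restrict (\<lambda>e'. u (Edg e')) ?I)) | _ \<Rightarrow> 0) ?B"
          and g="\<lambda>u. restrict u (Edg ` ?I)"])
      fix w assume w: "w \<in> \<Omega>1"
      have r: "restrict (\<lambda>e'. restrict (U w) (Edg ` ?I) (Edg e')) ?I = restrict (\<lambda>e'. W e' (tau w)) ?I"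
        by (auto simp: fun_eq_iff U_def restrict_def)
      show "restrict (U w) ?B = restrict (\<lambda>l. case l of Edg e \<Rightarrow> (if e \<in> ?I then restrict (U w) (Edg ` ?I) l else fm v e (restrict (\<lambda>e'. restrict (U w) (Edg ` ?I) (Edg e')) ?I)) | _ \<Rightarrow> 0) ?B"
        unfolding r using fm_prop[OF v _ w] by (auto simp: fun_eq_iff U_def restrict_def split: lbl.split)
      show "restrict (U w) (Edg ` ?I) = restrict (restrict (U w) ?B) (Edg ` ?I)"
        by (auto simp: fun_eq_iff restrict_def)
    qed
    then show ?thesis unfolding hraw_def using sub by simp
  qed
  then show ?thesis unfolding Gamma3_def using hraw_HN by blast
qed

lemma W_Alph: "w \<in> \<Omega>1 \<Longrightarrow> e \<in> E \<Longrightarrow> W e (tau w) \<in> Alph e"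
  using code tau_in unfolding is_code_def \<Omega>0_def by blast

lemma finAlph: "e \<in> E \<Longrightarrow> finite (Alph e)"
  using code unfolding is_code_def by blast

lemma H_edge: "e \<in> E \<Longrightarrow> hraw {Edg e} \<le> log 2 (real (card (Alph e)))"
proof -
  assume e: "e \<in> E"
  have "hraw {Edg e} = Hrv Q (\<lambda>w. restrict (U w) {Edg e})"
    unfolding hraw_def LL_def labels_def using e by simp
  also have "\<dots> = Hrv Q (\<lambda>w. W e (tau w))"
    by (rule H_eq[where f="\<lambda>x. (\<lambda>l. if l = Edg e then x else undefined)" and g="\<lambda>u. u (Edg e)"])
       (auto simp: U_def fun_eq_iff)
  also have "\<dots> \<le> log 2 (real (card (Alph e)))"
    by (rule Hrv_le_card_sub[OF finQ finAlph[OF e]]) (use W_Alph e set_Q in auto)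
  finally show ?thesis .
qed

end


context codeloc begin

lemma H_cong: "(\<And>w. w \<in> \<Omega>1 \<Longrightarrow> X w = Y w) \<Longrightarrow> Hrv Q X = Hrv Q Y"
  by (rule Hrv_cong) (use set_Q in auto)

lemma Hrv_P: "Hrv P Z = Hrv Q (\<lambda>w. Z (tau w))"
  unfolding Hrv_def map_tau[symmetric] by (simp add: map_pmf_comp)

lemma H_msg_val: "s \<in> S \<Longrightarrow> hraw {Msg s} = real (bb s)"
proof -
  assume s: "s \<in> S"
  have "Hrv (pmf_of_set {..<BB s}) (\<lambda>x. x) = ent (pmf_of_set {..<BB s})"
    unfolding Hrv_def by simp
  also have "\<dots> = log 2 (real (card {..<BB s}))" by (rule ent_uniform) (use BB_pos in auto)
  also have "\<dots> = real (bb s)" unfolding BB_def by (simp add: log_nat_power)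
  finally show ?thesis using H_msg[OF s] by simp
qed

lemma beta_sub: "t \<in> T \<Longrightarrow> beta t \<subseteq> S"
  using net unfolding wiretap_network_def by blast

lemma Aw_sub: "\<alpha> \<in> Aw \<Longrightarrow> \<alpha> \<subseteq> E"
  using net unfolding wiretap_network_def by blast

lemma log2_prod_pow: "finite F \<Longrightarrow> log 2 (real (\<Prod>s\<in>F. (2::nat) ^ b s)) = (\<Sum>s\<in>F. real (b s))"
proof -
  assume F: "finite F"
  have "(\<Prod>s\<in>F. (2::nat) ^ b s) = 2 ^ (\<Sum>s\<in>F. b s)" by (simp add: power_sum)
  then show ?thesis by (simp add: log_nat_power)
qed

lemma H_G4_lower:
  assumes t: "t \<in> T"
  shows "hraw (Edg ` In_edges E hdv t) \<le> hraw (Msg ` beta t \<union> Edg ` In_edges E hdv t)"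
proof -
  let ?M = "Msg ` beta t" and ?I = "Edg ` In_edges E hdv t"
  have sub: "?M \<union> ?I \<subseteq> LL" "?I \<subseteq> LL"
    unfolding LL_def labels_def using beta_sub[OF t] In_sub[of t] by blast+
  have "Hrv Q (\<lambda>w. restrict (U w) ?I) \<le> Hrv Q (\<lambda>w. restrict (U w) (?M \<union> ?I))"
    by (rule H_le[where f="\<lambda>u. restrict u ?I"]) (auto simp: fun_eq_iff restrict_def)
  then show ?thesis unfolding hraw_def using sub by simp
qed

lemma H_G4:
  assumes t: "t \<in> T" and eps: "0 \<le> \<epsilon>"
    and dec: "\<forall>s\<in>beta t. measure_pmf.prob P {(m,k). decode_est E hdv Dec W t s (m,k) \<noteq> m s} \<le> \<epsilon>"
  shows "hraw (Msg ` beta t \<union> Edg ` In_edges E hdv t) \<le> hraw (Edg ` In_edges E hdv t) + 1 + (real (card S) * \<epsilon>) * (\<Sum>s\<in>S. real (bb s))"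
proof -
  let ?M = "Msg ` beta t" and ?In = "In_edges E hdv t"
  let ?I = "Edg ` ?In"
  have bS: "beta t \<subseteq> S" using beta_sub[OF t] .
  have finb: "finite (beta t)" using finS bS finite_subset by blast
  have sub: "?M \<union> ?I \<subseteq> LL" "?I \<subseteq> LL"
    unfolding LL_def labels_def using bS In_sub[of t] by blast+
  define X where "X w = restrict (U w) ?M" for w
  define Y where "Y w = restrict (U w) ?I" for w
  define g where "g (y :: ('v, 'e) lbl \<Rightarrow> nat) = restrict (\<lambda>l :: ('v, 'e) lbl. case l of Msg s \<Rightarrow> hdm s (Dec t s (restrict (\<lambda>e. y (Edg e)) ?In)) | _ \<Rightarrow> 0) ?M" for y
  define A where "A = (PiE ?M (\<lambda>l. case l of Msg s \<Rightarrow> {..<BB s} | _ \<Rightarrow> {0}) :: (('v, 'e) lbl \<Rightarrow> nat) set)"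
  have finA: "finite A" unfolding A_def using finb by (intro finite_PiE) (auto split: lbl.split)
  have neA: "A \<noteq> {}" unfolding A_def using BB_pos by (auto simp: PiE_eq_empty_iff split: lbl.split)
  have XA: "X w \<in> A" if "w \<in> set_pmf Q" for w
  proof -
    have w: "w \<in> \<Omega>1" using that set_Q by simp
    show ?thesis unfolding X_def A_def using w_in[OF w] bS by (auto simp: U_def)
  qed
  have cardA: "log 2 (real (card A)) = (\<Sum>s\<in>beta t. real (bb s))"
  proof -
    have "card A = (\<Prod>l\<in>?M. card (case (l :: ('v, 'e) lbl) of Msg s \<Rightarrow> {..<BB s} | _ \<Rightarrow> {0::nat}))"
      unfolding A_def using finb by (simp add: card_PiE)
    also have "\<dots> = (\<Prod>s\<in>beta t. BB s)"
      by (subst prod.reindex) (auto simp: inj_on_def)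
    finally show ?thesis unfolding BB_def using log2_prod_pow[OF finb, of bb] by simp
  qed
  have eq1: "hraw (?M \<union> ?I) = Hrv Q (\<lambda>w. (X w, Y w))"
  proof -
    have "Hrv Q (\<lambda>w. restrict (U w) (?M \<union> ?I)) = Hrv Q (\<lambda>w. (X w, Y w))"
      by (rule H_eq[where f="\<lambda>(x, y). restrict (\<lambda>l. if l \<in> ?M then x l else y l) (?M \<union> ?I)"
            and g="\<lambda>u. (restrict u ?M, restrict u ?I)"])
         (auto simp: X_def Y_def fun_eq_iff restrict_def)
    then show ?thesis unfolding hraw_def using sub by simp
  qed
  have eq2: "hraw ?I = Hrv Q Y" unfolding hraw_def Y_def using sub by simp
  have fano: "Hrv Q (\<lambda>w. (X w, Y w)) \<le> Hrv Q Y + 1 + measure_pmf.prob Q {w. X w \<noteq> g (Y w)} * log 2 (real (card A))"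
    by (rule fano_cond[OF finQ finA neA XA])
  define D where "D s = {(m,k). decode_est E hdv Dec W t s (m,k) \<noteq> m s}" for s
  have evt: "{w. X w \<noteq> g (Y w)} \<inter> set_pmf Q \<subseteq> (\<Union>s\<in>beta t. tau -` D s)"
  proof
    fix w assume "w \<in> {w. X w \<noteq> g (Y w)} \<inter> set_pmf Q"
    then have ne: "X w \<noteq> g (Y w)" and w: "w \<in> \<Omega>1" using set_Q by auto
    then obtain l where l: "X w l \<noteq> g (Y w) l" by (auto simp: fun_eq_iff)
    then have "l \<in> ?M" unfolding X_def g_def by (auto simp: restrict_def split: if_splits)
    then obtain s where s: "s \<in> beta t" "l = Msg s" by auto
    have sS: "s \<in> S" using s bS by auto
    have r: "restrict (\<lambda>e. Y w (Edg e)) ?In = restrict (\<lambda>e. W e (tau w)) ?In"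
      unfolding Y_def by (auto simp: fun_eq_iff restrict_def U_def)
    have "fst (w s) \<noteq> hdm s (Dec t s (restrict (\<lambda>e. W e (tau w)) ?In))"
      using l s r unfolding X_def g_def by (simp add: U_def)
    then have "Dec t s (restrict (\<lambda>e. W e (tau w)) ?In) \<noteq> fst (tau w) s"
      using hdm_tau[OF w sS] by auto
    then have "tau w \<in> D s" unfolding D_def decode_est_def by (cases "tau w") auto
    then show "w \<in> (\<Union>s\<in>beta t. tau -` D s)" using s by auto
  qed
  have "measure_pmf.prob Q {w. X w \<noteq> g (Y w)} = measure_pmf.prob Q ({w. X w \<noteq> g (Y w)} \<inter> set_pmf Q)"
    by (simp add: measure_Int_set_pmf)
  also have "\<dots> \<le> measure_pmf.prob Q (\<Union>s\<in>beta t. tau -` D s)"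
    by (rule measure_pmf.finite_measure_mono[OF evt]) simp
  also have "\<dots> \<le> (\<Sum>s\<in>beta t. measure_pmf.prob Q (tau -` D s))"
    by (rule measure_pmf.finite_measure_subadditive_finite[OF finb]) simp
  also have "\<dots> = (\<Sum>s\<in>beta t. measure_pmf.prob P (D s))"
    by (simp add: map_tau[symmetric])
  also have "\<dots> \<le> (\<Sum>s\<in>beta t. \<epsilon>)"
    by (rule sum_mono) (use dec in \<open>simp add: D_def\<close>)
  also have "\<dots> = real (card (beta t)) * \<epsilon>" by simp
  also have "\<dots> \<le> real (card S) * \<epsilon>"
    using card_mono[OF finS bS] eps by (intro mult_right_mono) auto
  finally have pb: "measure_pmf.prob Q {w. X w \<noteq> g (Y w)} \<le> real (card S) * \<epsilon>" .
  have sb: "(\<Sum>s\<in>beta t. real (bb s)) \<le> (\<Sum>s\<in>S. real (bb s))"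
    by (rule sum_mono2[OF finS bS]) simp
  have "measure_pmf.prob Q {w. X w \<noteq> g (Y w)} * log 2 (real (card A)) \<le> (real (card S) * \<epsilon>) * (\<Sum>s\<in>S. real (bb s))"
    unfolding cardA using eps by (intro mult_mono pb sb) (auto intro: sum_nonneg)
  then show ?thesis using fano eq1 eq2 by linarith
qed

lemma H_G6:
  assumes a: "\<alpha> \<in> Aw"
  shows "hraw (Msg ` S \<union> Edg ` \<alpha>) \<le> hraw (Msg ` S) + hraw (Edg ` \<alpha>)"
    and "hraw (Msg ` S) + hraw (Edg ` \<alpha>) - hraw (Msg ` S \<union> Edg ` \<alpha>) \<le> MI P (\<lambda>(m,k). m) (\<lambda>\<omega>. restrict (\<lambda>e. W e \<omega>) \<alpha>)"
proof -
  have aE: "\<alpha> \<subseteq> E" using Aw_sub[OF a] .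
  have sub: "Msg ` S \<union> Edg ` \<alpha> \<subseteq> LL" "Msg ` S \<subseteq> LL" "Edg ` \<alpha> \<subseteq> LL"
    unfolding LL_def labels_def using aE by blast+
  define Fh where "Fh mt = restrict (\<lambda>l :: ('v, 'e) lbl. case l of Msg s \<Rightarrow> hdm s (mt s) | _ \<Rightarrow> 0) (Msg ` S)" for mt :: "'v \<Rightarrow> nat"
  define Ya where "Ya \<omega> = restrict (\<lambda>e. W e \<omega>) \<alpha>" for \<omega>
  have e1: "hraw (Msg ` S) = Hrv Q (\<lambda>w. Fh (fst (tau w)))"
  proof -
    have "Hrv Q (\<lambda>w. restrict (U w) (Msg ` S)) = Hrv Q (\<lambda>w. Fh (fst (tau w)))"
      by (rule H_cong) (auto simp: Fh_def U_def fun_eq_iff restrict_def hdm_tau)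
    then show ?thesis unfolding hraw_def using sub by simp
  qed
  have e2: "hraw (Edg ` \<alpha>) = Hrv Q (\<lambda>w. Ya (tau w))"
  proof -
    have "Hrv Q (\<lambda>w. restrict (U w) (Edg ` \<alpha>)) = Hrv Q (\<lambda>w. Ya (tau w))"
      by (rule H_eq[where f="\<lambda>y. restrict (\<lambda>l. case l of Edg e \<Rightarrow> y e | _ \<Rightarrow> 0) (Edg ` \<alpha>)"
            and g="\<lambda>u. restrict (\<lambda>e. u (Edg e)) \<alpha>"])
         (auto simp: Ya_def U_def fun_eq_iff restrict_def)
    then show ?thesis unfolding hraw_def using sub by simp
  qed
  have e3: "hraw (Msg ` S \<union> Edg ` \<alpha>) = Hrv Q (\<lambda>w. (Fh (fst (tau w)), Ya (tau w)))"
  proof -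
    have "Hrv Q (\<lambda>w. restrict (U w) (Msg ` S \<union> Edg ` \<alpha>)) = Hrv Q (\<lambda>w. (Fh (fst (tau w)), Ya (tau w)))"
      by (rule H_eq[where f="\<lambda>(x, y). restrict (\<lambda>l. case l of Edg e \<Rightarrow> y e | _ \<Rightarrow> x l) (Msg ` S \<union> Edg ` \<alpha>)"
            and g="\<lambda>u. (restrict u (Msg ` S), restrict (\<lambda>e. u (Edg e)) \<alpha>)"])
         (auto simp: Ya_def Fh_def U_def fun_eq_iff restrict_def hdm_tau split: lbl.split)
    then show ?thesis unfolding hraw_def using sub by simp
  qed
  show "hraw (Msg ` S \<union> Edg ` \<alpha>) \<le> hraw (Msg ` S) + hraw (Edg ` \<alpha>)"
    unfolding e1 e2 e3 by (rule Hrv_subadd[OF finQ])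
  have "Hrv Q (\<lambda>w. Fh (fst (tau w))) + Hrv Q (\<lambda>w. Ya (tau w)) - Hrv Q (\<lambda>w. (Fh (fst (tau w)), Ya (tau w)))
     \<le> Hrv Q (\<lambda>w. fst (tau w)) + Hrv Q (\<lambda>w. Ya (tau w)) - Hrv Q (\<lambda>w. (fst (tau w), Ya (tau w)))"
    by (rule Hrv_dp[OF finQ])
  also have "\<dots> = MI P (\<lambda>(m,k). m) Ya"
    unfolding MI_def Hrv_P by (simp add: case_prod_beta)
  finally show "hraw (Msg ` S) + hraw (Edg ` \<alpha>) - hraw (Msg ` S \<union> Edg ` \<alpha>) \<le> MI P (\<lambda>(m,k). m) (\<lambda>\<omega>. restrict (\<lambda>e. W e \<omega>) \<alpha>)"
    unfolding e1 e2 e3 Ya_def .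
qed

end


lemma log_prod_pos:
  fixes f :: "'a \<Rightarrow> real"
  assumes "finite F" "\<And>x. x \<in> F \<Longrightarrow> 0 < f x"
  shows "log 2 (\<Prod>x\<in>F. f x) = (\<Sum>x\<in>F. log 2 (f x))"
  using assms
proof (induction F rule: finite_induct)
  case empty then show ?case by simp
next
  case (insert x F)
  have p: "0 < (\<Prod>x\<in>F. f x)" using insert by (intro prod_pos) auto
  have fx: "0 < f x" using insert by auto
  have "log 2 (\<Prod>x\<in>insert x F. f x) = log 2 (f x * (\<Prod>x\<in>F. f x))" using insert.hyps by simp
  also have "\<dots> = log 2 (f x) + log 2 (\<Prod>x\<in>F. f x)" using fx p by (simp add: log_mult)
  also have "log 2 (\<Prod>x\<in>F. f x) = (\<Sum>x\<in>F. log 2 (f x))" using insert by simp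
  finally show ?case using insert.hyps by simp
qed

context codeloc begin

lemma bb_upper: "real (bb s) \<le> real n * max (r s) 0 + 1"
proof -
  have "real (bb s) \<le> real (nat \<lceil>real n * r s\<rceil>)" unfolding bb_def by simp
  also have "\<dots> \<le> real n * max (r s) 0 + 1"
  proof (cases "0 \<le> r s")
    case True
    then have "real (nat \<lceil>real n * r s\<rceil>) = of_int \<lceil>real n * r s\<rceil>" by simp
    also have "\<dots> \<le> real n * r s + 1" by linarith
    finally show ?thesis using True by simp
  next
    case False
    then have "real n * r s \<le> 0" by (simp add: mult_nonneg_nonpos)
    then have "\<lceil>real n * r s\<rceil> \<le> 0" by linarith
    then show ?thesis by simp
  qed
  finally show ?thesis .
qed

lemma msg_lb:
  assumes n: "0 < n" and eps: "0 \<le> \<epsilon>"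
    and rate: "real (nat \<lfloor>real n * rm s\<rfloor>) / real n \<ge> r s - \<epsilon>"
  shows "real n * (r s - \<epsilon>) \<le> real (bb s)"
proof (cases "aa s \<le> nat \<lceil>real n * r s\<rceil>")
  case True
  then have "bb s = aa s" unfolding bb_def by simp
  moreover have "real n * (r s - \<epsilon>) \<le> real (aa s)"
    using rate n unfolding aa_def by (simp add: field_simps)
  ultimately show ?thesis by simp
next
  case False
  then have b: "bb s = nat \<lceil>real n * r s\<rceil>" unfolding bb_def by simp
  have "real n * (r s - \<epsilon>) \<le> real n * r s" using eps n by (simp add: algebra_simps)
  also have "\<dots> \<le> real (nat \<lceil>real n * r s\<rceil>)" by linarith
  finally show ?thesis using b by simp
qed

definition "Rng l = (case l of Msg s \<Rightarrow> {..<BB s} | Key s \<Rightarrow> JJ s ` {..<FF s} | Edg e \<Rightarrow> Alph e)"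

lemma Alph_ne: "e \<in> E \<Longrightarrow> Alph e \<noteq> {}"
proof -
  assume e: "e \<in> E"
  obtain w where "w \<in> \<Omega>1" using ne\<Omega>1 by auto
  then show ?thesis using W_Alph[OF _ e] by auto
qed

lemma Rng_fin: "l \<in> LL \<Longrightarrow> finite (Rng l)" and Rng_ne: "l \<in> LL \<Longrightarrow> Rng l \<noteq> {}"
  unfolding LL_def labels_def Rng_def using finAlph Alph_ne by (auto split: lbl.split simp: lessThan_empty_iff BB_def FF_def)

lemma U_rng: "w \<in> \<Omega>1 \<Longrightarrow> l \<in> LL \<Longrightarrow> U w l \<in> Rng l"
  unfolding LL_def labels_def Rng_def U_def using w_in W_Alph by (auto split: lbl.split)

lemma hraw_le_sum: "\<gamma> \<subseteq> LL \<Longrightarrow> hraw \<gamma> \<le> (\<Sum>l\<in>LL. log 2 (real (card (Rng l))))"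
proof -
  assume g: "\<gamma> \<subseteq> LL"
  have fg: "finite \<gamma>" using finLL g finite_subset by blast
  have cpos: "0 < card (Rng l)" if "l \<in> LL" for l using Rng_fin[OF that] Rng_ne[OF that] by (simp add: card_gt_0_iff)
  have "hraw \<gamma> = Hrv Q (\<lambda>w. restrict (U w) \<gamma>)" unfolding hraw_def using g by simp
  also have "\<dots> \<le> log 2 (real (card (PiE \<gamma> Rng)))"
    by (rule Hrv_le_card_sub[OF finQ]) (use fg g Rng_fin U_rng set_Q in \<open>auto intro!: finite_PiE\<close>)
  also have "real (card (PiE \<gamma> Rng)) = (\<Prod>l\<in>\<gamma>. real (card (Rng l)))"
    using fg by (simp add: card_PiE)
  also have "log 2 \<dots> = (\<Sum>l\<in>\<gamma>. log 2 (real (card (Rng l))))"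
    by (rule log_prod_pos[OF fg]) (use cpos g in auto)
  also have "\<dots> \<le> (\<Sum>l\<in>LL. log 2 (real (card (Rng l))))"
    by (rule sum_mono2[OF finLL g]) (use cpos in \<open>fastforce simp: Suc_le_eq\<close>)
  finally show ?thesis .
qed

lemma sum_LL: "(\<Sum>l\<in>LL. f l) = (\<Sum>s\<in>S. f (Msg s)) + (\<Sum>s\<in>S. f (Key s)) + (\<Sum>e\<in>E. f (Edg e))"
proof -
  have "LL = (Msg ` S \<union> Key ` S) \<union> Edg ` E" unfolding LL_def labels_def by auto
  then have "(\<Sum>l\<in>LL. f l) = (\<Sum>l\<in>Msg ` S \<union> Key ` S. f l) + (\<Sum>l\<in>Edg ` E. f l)"
    by (simp only:) (rule sum.union_disjoint, use finS finE in auto)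
  also have "(\<Sum>l\<in>Msg ` S \<union> Key ` S. f l) = (\<Sum>l\<in>Msg ` S. f l) + (\<Sum>l\<in>Key ` S. f l)"
    using finS by (intro sum.union_disjoint) auto
  finally show ?thesis by (simp add: sum.reindex inj_on_def)
qed

lemma wv_in: "x \<in> XX s \<Longrightarrow> s \<in> S \<Longrightarrow> wv s x \<in> PiE (Out_edges E tlv s) Alph"
proof -
  assume x: "x \<in> XX s" and s: "s \<in> S"
  obtain m0 k0 where mk: "x = (m0, k0)" by (cases x)
  define w0 where "w0 = (restrict (\<lambda>s'. if s' = s then m0 else 1) S, restrict (\<lambda>s'. if s' = s then k0 else 1) S)"
  have w0: "w0 \<in> \<Omega>0"
    using x s unfolding \<Omega>0_eq w0_def mk XX_def idx_set_def by (auto simp: PiE_iff)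
  have "fe e x \<in> Alph e" if e: "e \<in> Out_edges E tlv s" for e
  proof -
    have "W e w0 = fe e x" using fe_prop[OF s e w0] s unfolding w0_def mk by simp
    moreover have "W e w0 \<in> Alph e" using code w0 Out_sub e unfolding is_code_def \<Omega>0_def by blast
    ultimately show ?thesis by simp
  qed
  then show ?thesis unfolding wv_def by auto
qed

lemma log_card_key:
  assumes s: "s \<in> S"
  shows "log 2 (real (card (Rng (Key s)))) \<le> 1 + real (bb s) + (\<Sum>e\<in>E. log 2 (real (card (Alph e))))"
proof -
  have finO: "finite (Out_edges E tlv s)" by (rule finite_subset[OF Out_sub finE])
  have cA: "0 < card (Alph e)" if "e \<in> E" for e using finAlph[OF that] Alph_ne[OF that] by (simp add: card_gt_0_iff)
  have neX: "XX s \<noteq> {}" unfolding XX_eq by auto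
  have cw: "card (wv s ` XX s) \<le> (\<Prod>e\<in>Out_edges E tlv s. card (Alph e))"
  proof -
    have sub: "wv s ` XX s \<subseteq> PiE (Out_edges E tlv s) Alph" using wv_in s by blast
    have "finite (PiE (Out_edges E tlv s) Alph)" using finO finAlph Out_sub by (intro finite_PiE) auto
    then have "card (wv s ` XX s) \<le> card (PiE (Out_edges E tlv s) Alph)"
      using sub by (rule card_mono)
    then show ?thesis using finO by (simp add: card_PiE)
  qed
  have cw1: "1 \<le> card (wv s ` XX s)" using neX finXX by (simp add: Suc_le_eq card_gt_0_iff)
  have ck: "card (Rng (Key s)) \<le> BB s * card (wv s ` XX s) + 1"
    unfolding Rng_def using JJ_card[of s] by simp
  have "real (card (Rng (Key s))) \<le> real (BB s * card (wv s ` XX s) + 1)"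
    using ck by (simp only: of_nat_le_iff)
  also have "\<dots> \<le> 2 * real (BB s) * real (card (wv s ` XX s))"
  proof -
    have b1: "1 \<le> real (BB s)" using BB_pos[of s] by simp
    have c1: "1 \<le> real (card (wv s ` XX s))" using cw1 by simp
    have "1 * 1 \<le> real (BB s) * real (card (wv s ` XX s))" by (rule mult_mono[OF b1 c1]) auto
    then show ?thesis by simp
  qed
  finally have c1: "real (card (Rng (Key s))) \<le> 2 * real (BB s) * real (card (wv s ` XX s))" .
  have pos: "0 < real (card (Rng (Key s)))" using Rng_fin Rng_ne s unfolding LL_def labels_def
    by (simp add: card_gt_0_iff)
  have x: "0 < real (BB s)" using BB_pos[of s] by simp
  have y: "0 < real (card (wv s ` XX s))" using cw1 by simp
  have rp: "0 < 2 * real (BB s) * real (card (wv s ` XX s))" using x y by simp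
  have "log 2 (real (card (Rng (Key s)))) \<le> log 2 (2 * real (BB s) * real (card (wv s ` XX s)))"
    by (subst log_le_cancel_iff) (use c1 pos rp in auto)
  also have "\<dots> = log 2 2 + log 2 (real (BB s)) + log 2 (real (card (wv s ` XX s)))"
    using x y by (simp add: log_mult)
  also have "log 2 (real (BB s)) = real (bb s)" unfolding BB_def by (simp add: log_nat_power)
  also have "log 2 (real (card (wv s ` XX s))) \<le> log 2 (\<Prod>e\<in>Out_edges E tlv s. real (card (Alph e)))"
  proof -
    have "real (card (wv s ` XX s)) \<le> (\<Prod>e\<in>Out_edges E tlv s. real (card (Alph e)))"
      using cw by (simp only: of_nat_prod[symmetric] of_nat_le_iff)
    then show ?thesis by (subst log_le_cancel_iff) (use y in auto)
  qed
  also have "\<dots> = (\<Sum>e\<in>Out_edges E tlv s. log 2 (real (card (Alph e))))"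
    by (rule log_prod_pos[OF finO]) (use cA Out_sub in auto)
  also have "\<dots> \<le> (\<Sum>e\<in>E. log 2 (real (card (Alph e))))"
  proof (rule sum_mono2[OF finE Out_sub])
    fix e assume "e \<in> E - Out_edges E tlv s"
    then have "1 \<le> real (card (Alph e))" using cA by (simp add: Suc_le_eq)
    then show "0 \<le> log 2 (real (card (Alph e)))" by simp
  qed
  finally show ?thesis by simp
qed

definition "Rb = (\<Sum>s\<in>S. 2 * max (r s) 0 + 3 + (\<Sum>e\<in>E. c e)) + (\<Sum>e\<in>E. c e)"

lemma hraw_box:
  assumes n: "0 < n" and caps: "\<forall>e\<in>E. log 2 (real (card (Alph e))) / real n \<le> c e"
    and g: "\<gamma> \<subseteq> LL"
  shows "hraw \<gamma> \<le> real n * Rb"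
proof -
  have lc: "log 2 (real (card (Alph e))) \<le> real n * c e" if "e \<in> E" for e
    using caps that n by (auto simp: divide_le_eq mult.commute)
  have sE: "(\<Sum>e\<in>E. log 2 (real (card (Alph e)))) \<le> real n * (\<Sum>e\<in>E. c e)"
    using lc by (simp add: sum_distrib_left sum_mono)
  have "hraw \<gamma> \<le> (\<Sum>l\<in>LL. log 2 (real (card (Rng l))))" by (rule hraw_le_sum[OF g])
  also have "\<dots> = (\<Sum>s\<in>S. log 2 (real (card (Rng (Msg s))))) + (\<Sum>s\<in>S. log 2 (real (card (Rng (Key s)))))
                 + (\<Sum>e\<in>E. log 2 (real (card (Rng (Edg e)))))" by (rule sum_LL)
  also have "\<dots> \<le> (\<Sum>s\<in>S. real (bb s)) + (\<Sum>s\<in>S. 1 + real (bb s) + (\<Sum>e\<in>E. log 2 (real (card (Alph e)))))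
                 + (\<Sum>e\<in>E. log 2 (real (card (Alph e))))"
  proof -
    have "log 2 (real (card (Rng (Msg s)))) = real (bb s)" for s
      unfolding Rng_def BB_def by (simp add: log_nat_power)
    moreover have "(\<Sum>s\<in>S. log 2 (real (card (Rng (Key s))))) \<le> (\<Sum>s\<in>S. 1 + real (bb s) + (\<Sum>e\<in>E. log 2 (real (card (Alph e)))))"
      by (rule sum_mono) (rule log_card_key)
    ultimately show ?thesis by (simp add: Rng_def)
  qed
  also have "\<dots> \<le> (\<Sum>s\<in>S. real n * (2 * max (r s) 0 + 3 + (\<Sum>e\<in>E. c e))) + real n * (\<Sum>e\<in>E. c e)"
  proof -
    have "real (bb s) + (1 + real (bb s) + (\<Sum>e\<in>E. log 2 (real (card (Alph e))))) \<le> real n * (2 * max (r s) 0 + 3 + (\<Sum>e\<in>E. c e))" for s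
    proof -
      have "1 \<le> real n" using n by simp
      then show ?thesis using bb_upper[of s] sE by (simp add: algebra_simps)
    qed
    then have "(\<Sum>s\<in>S. real (bb s)) + (\<Sum>s\<in>S. 1 + real (bb s) + (\<Sum>e\<in>E. log 2 (real (card (Alph e)))))
       \<le> (\<Sum>s\<in>S. real n * (2 * max (r s) 0 + 3 + (\<Sum>e\<in>E. c e)))"
      by (simp add: sum.distrib[symmetric] sum_mono)
    then show ?thesis using sE by linarith
  qed
  also have "\<dots> = real n * Rb" unfolding Rb_def by (simp add: sum_distrib_left algebra_simps)
  finally show ?thesis .
qed

end


context codeloc begin

lemma n_pos: "0 < n" using code unfolding is_code_def by simp

lemma zero_in: "(\<lambda>\<gamma>. 0) \<in> entropic S E \<inter> Gamma1 S E \<inter> Gamma2 S E tlv \<inter> Gamma3 V E tlv hdv S T"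
proof -
  have HN0: "(\<lambda>\<gamma>. 0) \<in> HN S E" unfolding HN_def by simp
  have "(\<lambda>\<gamma>. 0::real) \<in> entropic S E"
    unfolding entropic_def
  proof (intro CollectI conjI HN0 exI[of _ "return_pmf (\<lambda>_. 0)"] allI impI)
    show "finite (set_pmf (return_pmf (\<lambda>_. 0::nat)))" by simp
    fix \<gamma> :: "('v, 'e) lbl set"
    show "0 = ent (map_pmf (\<lambda>u. restrict u \<gamma>) (return_pmf (\<lambda>_. 0::nat)))"
      unfolding ent_def by simp
  qed
  then show ?thesis using HN0 unfolding Gamma1_def Gamma2_def Gamma3_def by simp
qed

lemma code_point:
  assumes eps: "0 \<le> \<epsilon>"
    and rates: "\<forall>s\<in>S. real (nat \<lfloor>real n * rm s\<rfloor>) / real n \<ge> r s - \<epsilon>"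
    and caps: "\<forall>e\<in>E. log 2 (real (card (Alph e))) / real n \<le> c e"
    and sec: "\<forall>\<alpha>\<in>Aw. MI P (\<lambda>(m,k). m) (\<lambda>\<omega>. restrict (\<lambda>e. W e \<omega>) \<alpha>) / real n \<le> \<epsilon>"
    and dec: "\<forall>t\<in>T. \<forall>s\<in>beta t. measure_pmf.prob P {(m,k). decode_est E hdv Dec W t s (m,k) \<noteq> m s} \<le> \<epsilon>"
  shows "\<exists>h. h \<in> closed_conv (entropic S E \<inter> Gamma1 S E \<inter> Gamma2 S E tlv \<inter> Gamma3 V E tlv hdv S T)
     \<and> (\<forall>\<gamma>. (\<gamma> \<subseteq> labels S E \<longrightarrow> 0 \<le> h \<gamma> \<and> h \<gamma> \<le> (\<Sum>s\<in>S. 2 * max (r s) 0 + 3 + (\<Sum>e\<in>E. c e)) + (\<Sum>e\<in>E. c e))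
                \<and> (\<not> \<gamma> \<subseteq> labels S E \<longrightarrow> h \<gamma> = 0))
     \<and> (\<forall>e\<in>E. h {Edg e} \<le> c e)
     \<and> (\<forall>t\<in>T. h (Edg ` In_edges E hdv t) \<le> h (Msg ` beta t \<union> Edg ` In_edges E hdv t)
          \<and> h (Msg ` beta t \<union> Edg ` In_edges E hdv t) \<le> h (Edg ` In_edges E hdv t)
               + (1 / real n + real (card S) * \<epsilon> * (\<Sum>s\<in>S. max (r s) 0 + 1)))
     \<and> (\<forall>\<alpha>\<in>Aw. h (Msg ` S \<union> Edg ` \<alpha>) \<le> h (Msg ` S) + h (Edg ` \<alpha>)
          \<and> h (Msg ` S) + h (Edg ` \<alpha>) \<le> h (Msg ` S \<union> Edg ` \<alpha>) + \<epsilon>)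
     \<and> (\<forall>s\<in>S. r s - \<epsilon> \<le> h {Msg s})"
proof -
  have n: "0 < n" by (rule n_pos)
  have rn: "0 < real n" using n by simp
  define h where "h \<gamma> = (1 / real n) * hraw \<gamma>" for \<gamma>
  have hin: "h \<in> closed_conv (entropic S E \<inter> Gamma1 S E \<inter> Gamma2 S E tlv \<inter> Gamma3 V E tlv hdv S T)"
    unfolding h_def
    by (rule closed_conv_scale[OF _ zero_in]) (use hraw_entropic hraw_G1 hraw_G2 hraw_G3 n in auto)
  have box: "(\<gamma> \<subseteq> labels S E \<longrightarrow> 0 \<le> h \<gamma> \<and> h \<gamma> \<le> (\<Sum>s\<in>S. 2 * max (r s) 0 + 3 + (\<Sum>e\<in>E. c e)) + (\<Sum>e\<in>E. c e))
                \<and> (\<not> \<gamma> \<subseteq> labels S E \<longrightarrow> h \<gamma> = 0)" for \<gamma>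
  proof (intro conjI impI)
    assume g: "\<gamma> \<subseteq> labels S E"
    then have g': "\<gamma> \<subseteq> LL" unfolding LL_def .
    have "0 \<le> hraw \<gamma>" unfolding hraw_def using Hrv_nonneg[of Q "\<lambda>w. restrict (U w) \<gamma>"] by simp
    then show "0 \<le> h \<gamma>" unfolding h_def by simp
    have "hraw \<gamma> \<le> real n * Rb" by (rule hraw_box[OF n caps g'])
    then show "h \<gamma> \<le> (\<Sum>s\<in>S. 2 * max (r s) 0 + 3 + (\<Sum>e\<in>E. c e)) + (\<Sum>e\<in>E. c e)"
      unfolding h_def Rb_def using rn by (simp add: divide_le_eq mult.commute)
  next
    assume "\<not> \<gamma> \<subseteq> labels S E"
    then show "h \<gamma> = 0" unfolding h_def hraw_def LL_def by simp
  qed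
  have g5: "h {Edg e} \<le> c e" if e: "e \<in> E" for e
  proof -
    have "hraw {Edg e} / real n \<le> log 2 (real (card (Alph e))) / real n"
      using H_edge[OF e] rn by (simp add: divide_right_mono)
    moreover have "log 2 (real (card (Alph e))) / real n \<le> c e" using caps e by blast
    ultimately show ?thesis unfolding h_def by simp
  qed
  have g4: "h (Edg ` In_edges E hdv t) \<le> h (Msg ` beta t \<union> Edg ` In_edges E hdv t)
          \<and> h (Msg ` beta t \<union> Edg ` In_edges E hdv t) \<le> h (Edg ` In_edges E hdv t)
               + (1 / real n + real (card S) * \<epsilon> * (\<Sum>s\<in>S. max (r s) 0 + 1))" if t: "t \<in> T" for t
  proof
    show "h (Edg ` In_edges E hdv t) \<le> h (Msg ` beta t \<union> Edg ` In_edges E hdv t)"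
      unfolding h_def using H_G4_lower[OF t] rn by (simp add: divide_right_mono)
    have a: "hraw (Msg ` beta t \<union> Edg ` In_edges E hdv t) \<le> hraw (Edg ` In_edges E hdv t) + 1 + (real (card S) * \<epsilon>) * (\<Sum>s\<in>S. real (bb s))"
      by (rule H_G4[OF t eps]) (use dec t in auto)
    have b: "(\<Sum>s\<in>S. real (bb s)) \<le> real n * (\<Sum>s\<in>S. max (r s) 0 + 1)"
    proof -
      have "(\<Sum>s\<in>S. real (bb s)) \<le> (\<Sum>s\<in>S. real n * (max (r s) 0 + 1))"
      proof (rule sum_mono)
        fix s have "1 \<le> real n" using n by simp
        then show "real (bb s) \<le> real n * (max (r s) 0 + 1)" using bb_upper[of s] by (simp add: algebra_simps)
      qed
      then show ?thesis by (simp add: sum_distrib_left)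
    qed
    have cs: "0 \<le> real (card S) * \<epsilon>" using eps by simp
    have "hraw (Msg ` beta t \<union> Edg ` In_edges E hdv t) \<le> hraw (Edg ` In_edges E hdv t) + 1 + (real (card S) * \<epsilon>) * (real n * (\<Sum>s\<in>S. max (r s) 0 + 1))"
      using a mult_left_mono[OF b cs] by linarith
    then have "hraw (Msg ` beta t \<union> Edg ` In_edges E hdv t) / real n \<le> (hraw (Edg ` In_edges E hdv t) + 1 + (real (card S) * \<epsilon>) * (real n * (\<Sum>s\<in>S. max (r s) 0 + 1))) / real n"
      using rn by (simp add: divide_right_mono)
    also have "\<dots> = hraw (Edg ` In_edges E hdv t) / real n + (1 / real n + real (card S) * \<epsilon> * (\<Sum>s\<in>S. max (r s) 0 + 1))"
      using rn by (simp add: field_simps)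
    finally show "h (Msg ` beta t \<union> Edg ` In_edges E hdv t) \<le> h (Edg ` In_edges E hdv t)
               + (1 / real n + real (card S) * \<epsilon> * (\<Sum>s\<in>S. max (r s) 0 + 1))"
      unfolding h_def by simp
  qed
  have g6: "h (Msg ` S \<union> Edg ` \<alpha>) \<le> h (Msg ` S) + h (Edg ` \<alpha>)
          \<and> h (Msg ` S) + h (Edg ` \<alpha>) \<le> h (Msg ` S \<union> Edg ` \<alpha>) + \<epsilon>" if a: "\<alpha> \<in> Aw" for \<alpha>
  proof
    show "h (Msg ` S \<union> Edg ` \<alpha>) \<le> h (Msg ` S) + h (Edg ` \<alpha>)"
      unfolding h_def using H_G6(1)[OF a] rn by (simp add: divide_right_mono add_divide_distrib[symmetric])
    have "(hraw (Msg ` S) + hraw (Edg ` \<alpha>) - hraw (Msg ` S \<union> Edg ` \<alpha>)) / real n \<le> MI P (\<lambda>(m,k). m) (\<lambda>\<omega>. restrict (\<lambda>e. W e \<omega>) \<alpha>) / real n"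
      using H_G6(2)[OF a] rn by (simp add: divide_right_mono)
    also have "\<dots> \<le> \<epsilon>" using sec a by simp
    finally have f: "(hraw (Msg ` S) + hraw (Edg ` \<alpha>) - hraw (Msg ` S \<union> Edg ` \<alpha>)) / real n \<le> \<epsilon>" .
    have "h (Msg ` S) + h (Edg ` \<alpha>) = (hraw (Msg ` S) + hraw (Edg ` \<alpha>) - hraw (Msg ` S \<union> Edg ` \<alpha>)) / real n + h (Msg ` S \<union> Edg ` \<alpha>)"
      unfolding h_def by (simp add: diff_divide_distrib add_divide_distrib)
    then show "h (Msg ` S) + h (Edg ` \<alpha>) \<le> h (Msg ` S \<union> Edg ` \<alpha>) + \<epsilon>" using f by linarith
  qed
  have gm: "r s - \<epsilon> \<le> h {Msg s}" if s: "s \<in> S" for s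
  proof -
    have "real n * (r s - \<epsilon>) \<le> real (bb s)" by (rule msg_lb[OF n eps]) (use rates s in auto)
    then show ?thesis unfolding h_def H_msg_val[OF s] using rn by (simp add: field_simps)
  qed
  show ?thesis using hin box g5 g4 g6 gm by blast
qed

end


lemma cl_le1: "closed {h :: 'i \<Rightarrow> real. h A \<le> d}"
  by (intro closed_Collect_le continuous_intros continuous_on_product_coordinates)
lemma cl_le2: "closed {h :: 'i \<Rightarrow> real. h A \<le> h B + d}"
  by (intro closed_Collect_le continuous_intros continuous_on_product_coordinates)
lemma cl_le3: "closed {h :: 'i \<Rightarrow> real. h A + h B \<le> h C + d}"
  by (intro closed_Collect_le continuous_intros continuous_on_product_coordinates)
lemma cl_ge1: "closed {h :: 'i \<Rightarrow> real. d \<le> h A}"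
  by (intro closed_Collect_le continuous_intros continuous_on_product_coordinates)

theorem theorem5:
  fixes V :: "'v set" and E :: "'e set" and tlv hdv :: "'e \<Rightarrow> 'v"
    and S T :: "'v set" and beta :: "'v \<Rightarrow> 'v set" and c :: "'e \<Rightarrow> real"
    and Aw :: "'e set set"
  assumes "wiretap_network V E tlv hdv S T beta c Aw"
  shows "weak_secrecy_region V E tlv hdv S T beta c Aw \<subseteq> outer_region V E tlv hdv S T beta c Aw"
proof
  fix x assume xw: "x \<in> weak_secrecy_region V E tlv hdv S T beta c Aw"
  have x0: "\<forall>v. v \<notin> S \<longrightarrow> x v = 0" using xw unfolding weak_secrecy_region_def by blast
  have xa: "\<forall>\<epsilon>>0. \<exists>N. \<forall>n\<ge>N. \<exists>rm rk Alph W Dec.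
         is_code V E tlv hdv S T n rm rk Alph W \<and>
         (let P = pmf_of_set (sample_space S n rm rk) in
           (\<forall>s\<in>S. real (nat \<lfloor>real n * rm s\<rfloor>) / real n \<ge> x s - \<epsilon>) \<and>
           (\<forall>e\<in>E. log 2 (real (card (Alph e))) / real n \<le> c e) \<and>
           (\<forall>\<alpha>\<in>Aw. MI P (\<lambda>(m,k). m) (\<lambda>\<omega>. restrict (\<lambda>e. W e \<omega>) \<alpha>) / real n \<le> \<epsilon>) \<and>
           (\<forall>t\<in>T. \<forall>s\<in>beta t.
              measure_pmf.prob P {(m,k). decode_est E hdv Dec W t s (m,k) \<noteq> m s} \<le> \<epsilon>))"
    using xw unfolding weak_secrecy_region_def by blast
  let ?G = "closed_conv (entropic S E \<inter> Gamma1 S E \<inter> Gamma2 S E tlv \<inter> Gamma3 V E tlv hdv S T)"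
  define Rb0 where "Rb0 = (\<Sum>s\<in>S. 2 * max (x s) 0 + 3 + (\<Sum>e\<in>E. c e)) + (\<Sum>e\<in>E. c e)"
  define C0 where "C0 = real (card S) * (\<Sum>s\<in>S. max (x s) 0 + 1)"
  define K where "K = (PiE UNIV (\<lambda>\<gamma>. if \<gamma> \<subseteq> labels S E then {0..Rb0} else {0}) :: (('v, 'e) lbl set \<Rightarrow> real) set)"
  define F1 where "F1 = {h :: ('v, 'e) lbl set \<Rightarrow> real. \<forall>e\<in>E. h {Edg e} \<le> c e}"
  define F2 where "F2 d = {h :: ('v, 'e) lbl set \<Rightarrow> real. \<forall>t\<in>T. h (Edg ` In_edges E hdv t) \<le> h (Msg ` beta t \<union> Edg ` In_edges E hdv t)
          \<and> h (Msg ` beta t \<union> Edg ` In_edges E hdv t) \<le> h (Edg ` In_edges E hdv t) + d}" for d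
  define F3 where "F3 d = {h :: ('v, 'e) lbl set \<Rightarrow> real. \<forall>\<alpha>\<in>Aw. h (Msg ` S \<union> Edg ` \<alpha>) \<le> h (Msg ` S) + h (Edg ` \<alpha>)
          \<and> h (Msg ` S) + h (Edg ` \<alpha>) \<le> h (Msg ` S \<union> Edg ` \<alpha>) + d}" for d
  define F4 where "F4 d = {h :: ('v, 'e) lbl set \<Rightarrow> real. \<forall>s\<in>S. x s - d \<le> h {Msg s}}" for d
  define Fam where "Fam d = ?G \<inter> F1 \<inter> F2 d \<inter> F3 d \<inter> F4 d" for d
  have C0: "0 \<le> C0" unfolding C0_def by (intro mult_nonneg_nonneg sum_nonneg) auto
  have clF1: "closed F1"
  proof -
    have "F1 = (\<Inter>e\<in>E. {h. h {Edg e} \<le> c e})" unfolding F1_def by auto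
    then show ?thesis by (simp add: closed_INT cl_le1)
  qed
  have clF2: "closed (F2 d)" for d
  proof -
    have "F2 d = (\<Inter>t\<in>T. {h. h (Edg ` In_edges E hdv t) \<le> h (Msg ` beta t \<union> Edg ` In_edges E hdv t) + 0}
         \<inter> {h. h (Msg ` beta t \<union> Edg ` In_edges E hdv t) \<le> h (Edg ` In_edges E hdv t) + d})"
      unfolding F2_def by auto
    then show ?thesis by (simp add: closed_INT closed_Int cl_le2 del: add_0_right)
  qed
  have clF3: "closed (F3 d)" for d
  proof -
    have "F3 d = (\<Inter>\<alpha>\<in>Aw. {h. h (Msg ` S \<union> Edg ` \<alpha>) + 0 \<le> h (Msg ` S) + h (Edg ` \<alpha>)}
         \<inter> {h. h (Msg ` S) + h (Edg ` \<alpha>) \<le> h (Msg ` S \<union> Edg ` \<alpha>) + d})"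
      unfolding F3_def by auto
    moreover have "closed {h :: ('v, 'e) lbl set \<Rightarrow> real. h A + 0 \<le> h B + h C}" for A B C
      by (intro closed_Collect_le continuous_intros continuous_on_product_coordinates)
    ultimately show ?thesis by (simp add: closed_INT closed_Int cl_le3 del: add_0_right)
  qed
  have clF4: "closed (F4 d)" for d
  proof -
    have "F4 d = (\<Inter>s\<in>S. {h. x s - d \<le> h {Msg s}})" unfolding F4_def by auto
    then show ?thesis by (simp add: closed_INT cl_ge1)
  qed
  have clFam: "closed (Fam d)" for d
    unfolding Fam_def by (intro closed_Int closed_conv_closed clF1 clF2 clF3 clF4)
  have monoFam: "Fam d \<subseteq> Fam d'" if "0 < d" "d \<le> d'" for d d'
  proof -
    have "F2 d \<subseteq> F2 d'" unfolding F2_def using that by (auto intro: order_trans)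
    moreover have "F3 d \<subseteq> F3 d'" unfolding F3_def using that by (auto intro: order_trans)
    moreover have "F4 d \<subseteq> F4 d'" unfolding F4_def using that by (auto intro: order_trans)
    ultimately show ?thesis unfolding Fam_def by auto
  qed
  have neFam: "Fam d \<inter> K \<noteq> {}" if d: "0 < d" for d
  proof -
    define \<epsilon> where "\<epsilon> = d / (2 * (C0 + 1))"
    have eps: "0 < \<epsilon>" unfolding \<epsilon>_def using d C0 by simp
    have epsd: "\<epsilon> \<le> d" unfolding \<epsilon>_def using d C0 by (simp add: field_simps)
    have C0eps: "C0 * \<epsilon> \<le> d / 2"
    proof -
      have "C0 * \<epsilon> = d / 2 * (C0 / (C0 + 1))" unfolding \<epsilon>_def using C0 by (simp add: field_simps)
      also have "\<dots> \<le> d / 2 * 1" using d C0 by (intro mult_left_mono) auto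
      finally show ?thesis by simp
    qed
    obtain N where N: "\<forall>n\<ge>N. \<exists>rm rk Alph W Dec.
         is_code V E tlv hdv S T n rm rk Alph W \<and>
         (let P = pmf_of_set (sample_space S n rm rk) in
           (\<forall>s\<in>S. real (nat \<lfloor>real n * rm s\<rfloor>) / real n \<ge> x s - \<epsilon>) \<and>
           (\<forall>e\<in>E. log 2 (real (card (Alph e))) / real n \<le> c e) \<and>
           (\<forall>\<alpha>\<in>Aw. MI P (\<lambda>(m,k). m) (\<lambda>\<omega>. restrict (\<lambda>e. W e \<omega>) \<alpha>) / real n \<le> \<epsilon>) \<and>
           (\<forall>t\<in>T. \<forall>s\<in>beta t.
              measure_pmf.prob P {(m,k). decode_est E hdv Dec W t s (m,k) \<noteq> m s} \<le> \<epsilon>))"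
      using xa eps by blast
    define n where "n = max N (nat \<lceil>2 / d\<rceil> + 1)"
    have nN: "n \<ge> N" unfolding n_def by simp
    have n2: "2 / d < real n" unfolding n_def by linarith
    have npos: "0 < real n" using n2 d by (smt (verit) divide_pos_pos)
    have inv_n: "1 / real n \<le> d / 2"
      using n2 d npos by (simp add: field_simps)
    obtain rm rk Alph W Dec where code: "is_code V E tlv hdv S T n rm rk Alph W"
      and cond: "let P = pmf_of_set (sample_space S n rm rk) in
           (\<forall>s\<in>S. real (nat \<lfloor>real n * rm s\<rfloor>) / real n \<ge> x s - \<epsilon>) \<and>
           (\<forall>e\<in>E. log 2 (real (card (Alph e))) / real n \<le> c e) \<and>
           (\<forall>\<alpha>\<in>Aw. MI P (\<lambda>(m,k). m) (\<lambda>\<omega>. restrict (\<lambda>e. W e \<omega>) \<alpha>) / real n \<le> \<epsilon>) \<and>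
           (\<forall>t\<in>T. \<forall>s\<in>beta t.
              measure_pmf.prob P {(m,k). decode_est E hdv Dec W t s (m,k) \<noteq> m s} \<le> \<epsilon>)"
      using N nN by blast
    interpret L: codeloc V E tlv hdv S T beta c Aw n rm rk Alph W x
      by unfold_locales (rule assms, rule code)
    have PP: "L.P = pmf_of_set (sample_space S n rm rk)" unfolding L.P_def L.\<Omega>0_def ..
    have c1: "\<forall>s\<in>S. real (nat \<lfloor>real n * rm s\<rfloor>) / real n \<ge> x s - \<epsilon>"
      and c2: "\<forall>e\<in>E. log 2 (real (card (Alph e))) / real n \<le> c e"
      and c3: "\<forall>\<alpha>\<in>Aw. MI L.P (\<lambda>(m,k). m) (\<lambda>\<omega>. restrict (\<lambda>e. W e \<omega>) \<alpha>) / real n \<le> \<epsilon>"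
      and c4: "\<forall>t\<in>T. \<forall>s\<in>beta t. measure_pmf.prob L.P {(m,k). decode_est E hdv Dec W t s (m,k) \<noteq> m s} \<le> \<epsilon>"
      using cond unfolding Let_def PP by auto
    obtain h where h: "h \<in> ?G"
      and hbox: "\<forall>\<gamma>. (\<gamma> \<subseteq> labels S E \<longrightarrow> 0 \<le> h \<gamma> \<and> h \<gamma> \<le> Rb0) \<and> (\<not> \<gamma> \<subseteq> labels S E \<longrightarrow> h \<gamma> = 0)"
      and h5: "\<forall>e\<in>E. h {Edg e} \<le> c e"
      and h4: "\<forall>t\<in>T. h (Edg ` In_edges E hdv t) \<le> h (Msg ` beta t \<union> Edg ` In_edges E hdv t)
          \<and> h (Msg ` beta t \<union> Edg ` In_edges E hdv t) \<le> h (Edg ` In_edges E hdv t)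
               + (1 / real n + real (card S) * \<epsilon> * (\<Sum>s\<in>S. max (x s) 0 + 1))"
      and h6: "\<forall>\<alpha>\<in>Aw. h (Msg ` S \<union> Edg ` \<alpha>) \<le> h (Msg ` S) + h (Edg ` \<alpha>)
          \<and> h (Msg ` S) + h (Edg ` \<alpha>) \<le> h (Msg ` S \<union> Edg ` \<alpha>) + \<epsilon>"
      and hm: "\<forall>s\<in>S. x s - \<epsilon> \<le> h {Msg s}"
      using L.code_point[of \<epsilon> Dec, OF _ c1 c2 c3 c4] eps unfolding Rb0_def by auto
    have slack: "1 / real n + real (card S) * \<epsilon> * (\<Sum>s\<in>S. max (x s) 0 + 1) \<le> d"
    proof -
      have "real (card S) * \<epsilon> * (\<Sum>s\<in>S. max (x s) 0 + 1) = C0 * \<epsilon>" unfolding C0_def by simp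
      then show ?thesis using C0eps inv_n by linarith
    qed
    have "h \<in> F2 d" unfolding F2_def using h4 slack by force
    moreover have "h \<in> F3 d" unfolding F3_def using h6 epsd by force
    moreover have "h \<in> F4 d" unfolding F4_def using hm epsd by force
    moreover have "h \<in> F1" unfolding F1_def using h5 by simp
    moreover have "h \<in> K" unfolding K_def using hbox by (auto simp: PiE_iff)
    ultimately have "h \<in> Fam d \<inter> K" unfolding Fam_def using h by simp
    then show ?thesis by blast
  qed
  have cK: "compact K" unfolding K_def by (rule compact_box)
  have ex: "\<exists>h\<in>K. \<forall>d>0. h \<in> Fam d"
  proof (rule nested_compact[OF cK])
    show "\<And>d. 0 < d \<Longrightarrow> closed (Fam d)" by (rule clFam)
    show "\<And>d. 0 < d \<Longrightarrow> Fam d \<inter> K \<noteq> {}" by (rule neFam)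
    show "\<And>d d'. 0 < d \<Longrightarrow> d \<le> d' \<Longrightarrow> Fam d \<subseteq> Fam d'" by (rule monoFam)
  qed
  then obtain h where hK: "h \<in> K" and hF: "\<And>d. 0 < d \<Longrightarrow> h \<in> Fam d" by blast
  have hG: "h \<in> ?G" using hF[of 1] unfolding Fam_def by simp
  have GHN: "?G \<subseteq> HN S E"
    by (rule closed_conv_sub) (use entropic_HN closed_HN convex_HN in auto)
  have hHN: "h \<in> HN S E" using hG GHN by blast
  have e4: "h (Msg ` beta t \<union> Edg ` In_edges E hdv t) = h (Edg ` In_edges E hdv t)" if t: "t \<in> T" for t
  proof (rule antisym)
    show "h (Msg ` beta t \<union> Edg ` In_edges E hdv t) \<le> h (Edg ` In_edges E hdv t)"
    proof (rule field_le_epsilon)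
      fix d :: real assume "0 < d"
      then show "h (Msg ` beta t \<union> Edg ` In_edges E hdv t) \<le> h (Edg ` In_edges E hdv t) + d"
        using hF[of d] t unfolding Fam_def F2_def by auto
    qed
    show "h (Edg ` In_edges E hdv t) \<le> h (Msg ` beta t \<union> Edg ` In_edges E hdv t)"
      using hF[of 1] t unfolding Fam_def F2_def by auto
  qed
  have e6: "h (Msg ` S \<union> Edg ` \<alpha>) = h (Msg ` S) + h (Edg ` \<alpha>)" if a: "\<alpha> \<in> Aw" for \<alpha>
  proof (rule antisym)
    show "h (Msg ` S \<union> Edg ` \<alpha>) \<le> h (Msg ` S) + h (Edg ` \<alpha>)"
      using hF[of 1] a unfolding Fam_def F3_def by auto
    show "h (Msg ` S) + h (Edg ` \<alpha>) \<le> h (Msg ` S \<union> Edg ` \<alpha>)"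
    proof (rule field_le_epsilon)
      fix d :: real assume "0 < d"
      then show "h (Msg ` S) + h (Edg ` \<alpha>) \<le> h (Msg ` S \<union> Edg ` \<alpha>) + d"
        using hF[of d] a unfolding Fam_def F3_def by auto
    qed
  qed
  have e5: "h {Edg e} \<le> c e" if "e \<in> E" for e using hF[of 1] that unfolding Fam_def F1_def by auto
  have em: "x s \<le> h {Msg s}" if s: "s \<in> S" for s
  proof -
    have "x s \<le> h {Msg s} + d" if "0 < d" for d
      using hF[OF that] s unfolding Fam_def F4_def by auto
    then show ?thesis by (rule field_le_epsilon)
  qed
  have hin: "h \<in> ?G \<inter> Gamma4 S E hdv T beta \<inter> Gamma5 S E c \<inter> Gamma6 S E Aw"
    unfolding Gamma4_def Gamma5_def Gamma6_def using hG hHN e4 e5 e6 by blast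
  show "x \<in> outer_region V E tlv hdv S T beta c Aw"
    unfolding outer_region_def Lambda_def
  proof (intro CollectI conjI)
    show "\<forall>v. v \<notin> S \<longrightarrow> x v = 0" by (rule x0)
    show "\<exists>y\<in>ProjS S ` (?G \<inter> Gamma4 S E hdv T beta \<inter> Gamma5 S E c \<inter> Gamma6 S E Aw). \<forall>s\<in>S. x s \<le> y s"
      using hin em by (intro bexI[of _ "ProjS S h"]) (auto simp: ProjS_def)
  qed
qed


end
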